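(* Let $\Phi\in\mathbb T$ be irrational, $\lambda_1\in(0,1]$, $\lambda_2\in[0,1]$ and $z\in\mathbb C\setminus\{0\}$. Then $$L_{\lambda_1,\lambda_2,\Phi}(z)\ge\log\left[\frac{\lambda_2(1+\lambda_1')}{\lambda_1(1+\lambda_2')}\right].$$ In particular $L_{\lambda_1,\lambda_2,\Phi}(z)>0$ for all $z\in\partial\mathbb D$ whenever $0<\lambda_1<\lambda_2\le1$, and for every $\lambda_2\in(0,1]$ and $z\in\partial\mathbb D$, $\lim_{\lambda_1\downarrow0}L_{\lambda_1,\lambda_2,\Phi}(z)=\infty$.
   Context: For $\lambda\in[0,1]$ put $\lambda'=\sqrt{1-\lambda^2}$; $\mathbb T=\mathbb R/\mathbb Z$, $\partial\mathbb D$ the unit circle. Writing $\mathrm c(\theta)=\cos(2\pi\theta)$, $\mathrm s(\theta)=\sin(2\pi\theta)$, for $\lambda_1\in(0,1]$, $\lambda_2\in[0,1]$, $z\in\mathbb C\setminus\{0\}$ define $$A_{\lambda_1,\lambda_2,z}(\theta)=\frac{1}{\lambda_2\mathrm c(\theta)-i\lambda_2'}\begin{bmatrix}\lambda_1^{-1}z^{-1}+2\lambda_1'\lambda_1^{-1}\lambda_2\mathrm s(\theta)+z\lambda_1'^2\lambda_1^{-1} & -\lambda_2\mathrm s(\theta)-\lambda_1'z\\ -\lambda_2\mathrm s(\theta)-\lambda_1'z & \lambda_1 z\end{bmatrix}$$ (the transfer matrix cocycle of the unitary almost-Mathieu operator), its iterates $A^n(\theta)=A(\theta+(n-1)\Phi)\cdots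 A(\theta+\Phi)A(\theta)$, and $L_{\lambda_1,\lambda_2,\Phi}(z)=\lim_{n\to\infty}\frac1n\int_{\mathbb T}\log\|A^n_{\lambda_1,\lambda_2,z}(\theta)\|d\theta$. (The right-hand side of the inequality is interpreted as $-\infty$ when $\lambda_2=0$.) *)

theory Defs
  imports "HOL-Analysis.Analysis"
begin

definition lprime :: "real \<Rightarrow> real" where
  "lprime lam = sqrt (1 - lam\<^sup>2)"

definition cc :: "real \<Rightarrow> real" where "cc \<theta> = cos (2 * pi * \<theta>)"
definition ss :: "real \<Rightarrow> real" where "ss \<theta> = sin (2 * pi * \<theta>)"

text \<open>The transfer-matrix cocycle of the unitary almost-Mathieu operator
  (angles in T = R/Z represented by real numbers; all functions are 1-periodic).\<close>
definition UAMO_A :: "real \<Rightarrow> real \<Rightarrow> complex \<Rightarrow> real \<Rightarrow> complex^2^2" where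
  "UAMO_A l1 l2 z \<theta> =
     (let d = complex_of_real (l2 * cc \<theta>) - \<i> * complex_of_real (lprime l2);
          a = inverse (complex_of_real l1) * inverse z
              + complex_of_real (2 * lprime l1 / l1 * l2 * ss \<theta>)
              + z * complex_of_real ((lprime l1)\<^sup>2 / l1);
          b = - complex_of_real (l2 * ss \<theta>) - complex_of_real (lprime l1) * z;
          e = complex_of_real l1 * z
      in (\<chi> i j. (if i = 1 then (if j = 1 then a else b) else (if j = 1 then b else e)) / d))"

fun UAMO_iter :: "real \<Rightarrow> real \<Rightarrow> real \<Rightarrow> complex \<Rightarrow> nat \<Rightarrow> real \<Rightarrow> complex^2^2" where
  "UAMO_iter l1 l2 \<Phi> z 0 \<theta> = mat 1"
| "UAMO_iter l1 l2 \<Phi> z (Suc n) \<theta> =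
     UAMO_A l1 l2 z (\<theta> + real n * \<Phi>) ** UAMO_iter l1 l2 \<Phi> z n \<theta>"

definition mnorm :: "complex^2^2 \<Rightarrow> real" where
  "mnorm M = onorm (\<lambda>v. M *v v)"

definition lyap :: "real \<Rightarrow> real \<Rightarrow> real \<Rightarrow> complex \<Rightarrow> real" where
  "lyap l1 l2 \<Phi> z =
     lim (\<lambda>n. (1 / real n) *
        (LINT \<theta>:{0..1}|lborel. ln (mnorm (UAMO_iter l1 l2 \<Phi> z n \<theta>))))"

end

theory Submission
  imports Defs "HOL-Complex_Analysis.Complex_Analysis" "HOL-Computational_Algebra.Fundamental_Theorem_Algebra"
begin

no_notation fps_nth (infixl "$" 75)





definition ee :: "real \<Rightarrow> complex" where
  "ee t = exp (2 * of_real pi * \<i> * of_real t)"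

lemma cmod_ee [simp]: "cmod (ee t) = 1"
  unfolding ee_def by (simp add: norm_exp_eq_Re)

lemma continuous_on_ee [continuous_intros]: "continuous_on S ee"
  unfolding ee_def by (intro continuous_intros)

lemma mean_value_hol:
  assumes hol: "f holomorphic_on ball 0 R" and R: "R > 1"
  shows "((\<lambda>t. f (ee t)) has_integral f 0) {0..1}"
proof -
  have cb: "cball 0 1 \<subseteq> ball (0::complex) R" using R by auto
  have "((\<lambda>u. f u/(u-0)) has_contour_integral (2 * of_real pi * \<i> * f 0)) (circlepath 0 1)"
  proof (rule Cauchy_integral_circlepath)
    show "continuous_on (cball 0 1) f"
      using cb hol holomorphic_on_imp_continuous_on holomorphic_on_subset by blast
    show "f holomorphic_on ball 0 1" using cb hol holomorphic_on_subset ball_subset_cball by blast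
  qed auto
  hence "((\<lambda>x. f (ee x) / ee x * (2 * pi * \<i> * 1 * ee x)) has_integral (2 * of_real pi * \<i> * f 0)) {0..1}"
    unfolding has_contour_integral_def
    by (rule has_integral_eq[rotated]) (simp add: vector_derivative_circlepath01 del: circlepath, simp add: circlepath ee_def)
  hence "((\<lambda>x. (2 * of_real pi * \<i>) * f (ee x)) has_integral (2 * of_real pi * \<i>) * f 0) {0..1}"
    by (rule has_integral_eq[rotated]) (simp add: ee_def)
  hence "((\<lambda>x. inverse (2 * of_real pi * \<i>) * ((2 * of_real pi * \<i>) * f (ee x))) has_integral inverse (2 * of_real pi * \<i>) * ((2 * of_real pi * \<i>) * f 0)) {0..1}"
    by (rule has_integral_mult_right)
  moreover have "inverse (2 * of_real pi * \<i>) * ((2 * of_real pi * \<i>) * y) = y" for y :: complex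
    using pi_gt_zero by (simp add: field_simps)
  ultimately show ?thesis by simp
qed


lemma J_small:
  fixes b :: complex
  assumes b: "cmod b < 1"
  shows "set_integrable lborel {0..1} (\<lambda>t. ln (cmod (1 - b * ee t)))"
    and "(LINT t:{0..1}|lborel. ln (cmod (1 - b * ee t))) = 0"
proof -
  define R where "R = 2 / (1 + cmod b)"
  have p: "1 + cmod b > 0" by (simp add: add_pos_nonneg)
  have R1: "R > 1" using b p unfolding R_def by (simp add: field_simps)
  have bR: "cmod b * R < 1" using b p unfolding R_def by (simp add: field_simps)
  have nz: "1 - b * w \<notin> \<real>\<^sub>\<le>\<^sub>0" if "w \<in> ball 0 R" for w
  proof -
    have "cmod (b * w) \<le> cmod b * R"
      using that by (simp add: norm_mult mult_left_mono less_imp_le)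
    hence "cmod (b*w) < 1" using bR by simp
    hence "Re (b * w) < 1" using complex_Re_le_cmod le_less_trans by blast
    hence "Re (1 - b*w) > 0" by simp
    thus ?thesis by (auto simp: complex_nonpos_Reals_iff)
  qed
  have hol: "(\<lambda>w. Ln (1 - b * w)) holomorphic_on ball 0 R"
    by (intro holomorphic_intros nz) auto
  have "((\<lambda>t. Ln (1 - b * ee t)) has_integral Ln (1 - b * 0)) {0..1}"
    using mean_value_hol[OF hol R1] by simp
  hence "((Re \<circ> (\<lambda>t. Ln (1 - b * ee t))) has_integral Re 0) {0..1}"
    by (intro has_integral_linear) (auto simp: bounded_linear_Re)
  moreover have "1 - b * ee t \<noteq> 0" for t
    using b by (metis cmod_ee mult.commute mult_cancel_left1 norm_mult right_minus_eq less_irrefl)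
  ultimately have hi: "((\<lambda>t. ln (cmod (1 - b * ee t))) has_integral 0) {0..1}"
    by (simp add: o_def)
  have cont: "continuous_on {0..1} (\<lambda>t. ln (cmod (1 - b * ee t)))"
    using \<open>\<And>t. 1 - b * ee t \<noteq> 0\<close> by (intro continuous_intros) auto
  show si: "set_integrable lborel {0..1} (\<lambda>t. ln (cmod (1 - b * ee t)))"
    by (rule borel_integrable_atLeastAtMost'[OF cont])
  show "(LINT t:{0..1}|lborel. ln (cmod (1 - b * ee t))) = 0"
    using set_borel_integral_eq_integral(2)[OF si] hi integral_unique by metis
qed


lemma ee_measurable [measurable]: "ee \<in> borel_measurable borel"
  by (intro borel_measurable_continuous_onI continuous_on_ee)

lemma ee_eq_imp: assumes "ee s = ee t" shows "\<exists>n::int. s = t + of_int n"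
proof -
  from assms obtain n :: int where n: "2 * of_real pi * \<i> * of_real s = 2 * of_real pi * \<i> * of_real t + (of_int (2 * n) * pi) * \<i>"
    unfolding ee_def exp_eq by blast
  hence "Im (2 * of_real pi * \<i> * of_real s) = Im (2 * of_real pi * \<i> * of_real t + (of_int (2 * n) * pi) * \<i>)"
    by simp
  hence "2 * pi * s = 2 * pi * t + 2 * pi * of_int n" by (simp add: algebra_simps)
  hence "s = t + of_int n" using pi_gt_zero
    by (metis (no_types, opaque_lifting) distrib_left mult_cancel_left mult_eq_0_iff pi_neq_zero zero_neq_numeral)
  thus ?thesis by blast
qed

lemma countable_ee_eq: "countable {t. ee t = a}"
proof (cases "{t. ee t = a} = {}")
  case True thus ?thesis by simp
next
  case False
  then obtain t0 where t0: "ee t0 = a" by blast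
  have "{t. ee t = a} \<subseteq> range (\<lambda>n::int. t0 + of_int n)"
  proof
    fix t assume "t \<in> {t. ee t = a}"
    hence "ee t = ee t0" using t0 by simp
    then obtain n :: int where "t = t0 + of_int n" using ee_eq_imp by blast
    thus "t \<in> range (\<lambda>n::int. t0 + of_int n)" by blast
  qed
  thus ?thesis by (rule countable_subset) simp
qed

lemma AE_ee_neq: "AE t in lborel. ee t \<noteq> a"
proof -
  have "{t. ee t = a} \<in> null_sets lborel" by (rule countable_imp_null_set_lborel[OF countable_ee_eq])
  thus ?thesis by (rule AE_I') auto
qed


lemma fatou_upper:
  fixes f :: "nat \<Rightarrow> real \<Rightarrow> real" and g :: "real \<Rightarrow> real"
  assumes fi: "\<And>k. set_integrable lborel {0..1} (f k)"
    and fC: "\<And>k t. t \<in> {0..1} \<Longrightarrow> f k t \<le> C"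
    and fc: "\<And>k. (LINT t:{0..1}|lborel. f k t) \<ge> c"
    and lim: "AE t in lborel. t \<in> {0..1} \<longrightarrow> (\<lambda>k. f k t) \<longlonglongrightarrow> g t"
    and gm: "g \<in> borel_measurable lborel"
  shows "set_integrable lborel {0..1} g" "(LINT t:{0..1}|lborel. g t) \<ge> c"
proof -
  define A :: "real set" where "A = {0..1}"
  define h where "h k t = indicator A t * (C - f k t)" for k t
  define H where "H t = indicator A t * (C - g t)" for t
  have mA: "measure lborel A = 1" by (simp add: A_def)
  have cint: "set_integrable lborel A (\<lambda>_. C)"
    unfolding A_def by (rule borel_integrable_atLeastAtMost') (rule continuous_on_const)
  have cval: "(LINT t:A|lborel. C) = C" using set_integral_const[of A lborel C] mA by (simp add: A_def)
  have hint: "integrable lborel (h k)" for k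
  proof -
    have "set_integrable lborel A (\<lambda>t. C - f k t)" using cint fi[of k] unfolding A_def by auto
    thus ?thesis unfolding set_integrable_def h_def by simp
  qed
  have hval: "integral\<^sup>L lborel (h k) = C - (LINT t:A|lborel. f k t)" for k
  proof -
    have "integral\<^sup>L lborel (h k) = (LINT t:A|lborel. C - f k t)"
      unfolding set_lebesgue_integral_def h_def by simp
    also have "\<dots> = C - (LINT t:A|lborel. f k t)"
      using set_integral_diff(2)[OF cint, of "f k"] fi[of k] cval by (simp add: A_def)
    finally show ?thesis .
  qed
  have hnn: "0 \<le> h k t" for k t using fC[of t k] unfolding h_def A_def by (auto simp: indicator_def)
  have hm [measurable]: "h k \<in> borel_measurable lborel" for k using hint by (rule borel_measurable_integrable)
  have gm' [measurable]: "g \<in> borel_measurable borel" using gm by simp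
  have Hm [measurable]: "H \<in> borel_measurable lborel" unfolding H_def A_def by measurable
  have nnk: "(\<integral>\<^sup>+t. ennreal (h k t) \<partial>lborel) = ennreal (integral\<^sup>L lborel (h k))" for k
    by (rule nn_integral_eq_integral[OF hint]) (simp add: hnn)
  have le1: "(\<integral>\<^sup>+t. ennreal (h k t) \<partial>lborel) \<le> ennreal (C - c)" for k
    using nnk[of k] hval[of k] fc[of k] by (simp add: A_def ennreal_leI)
  have AEl: "AE t in lborel. liminf (\<lambda>k. ennreal (h k t)) = ennreal (H t)"
    using lim
  proof eventually_elim
    case (elim t)
    show ?case
    proof (cases "t \<in> A")
      case True
      hence "(\<lambda>k. f k t) \<longlonglongrightarrow> g t" using elim by (simp add: A_def)
      hence "(\<lambda>k. h k t) \<longlonglongrightarrow> H t" unfolding h_def H_def using True by (intro tendsto_intros) 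
      hence "(\<lambda>k. ennreal (h k t)) \<longlonglongrightarrow> ennreal (H t)" by (rule tendsto_ennrealI)
      thus ?thesis by (intro lim_imp_Liminf) auto
    next
      case False thus ?thesis using Liminf_const[of sequentially "0::ennreal"] by (simp add: h_def H_def)
    qed
  qed
  have "(\<integral>\<^sup>+t. ennreal (H t) \<partial>lborel) = (\<integral>\<^sup>+t. liminf (\<lambda>k. ennreal (h k t)) \<partial>lborel)"
    using AEl by (intro nn_integral_cong_AE) (auto elim: eventually_mono)
  also have "\<dots> \<le> liminf (\<lambda>k. \<integral>\<^sup>+t. ennreal (h k t) \<partial>lborel)"
    by (rule nn_integral_liminf) measurable
  also have "\<dots> \<le> limsup (\<lambda>k. \<integral>\<^sup>+t. ennreal (h k t) \<partial>lborel)"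
    by (rule Liminf_le_Limsup) simp
  also have "\<dots> \<le> ennreal (C - c)"
    by (rule Limsup_bounded) (simp add: le1)
  finally have Hle: "(\<integral>\<^sup>+t. ennreal (H t) \<partial>lborel) \<le> ennreal (C - c)" .
  have Hnn: "AE t in lborel. 0 \<le> H t"
    using lim
  proof eventually_elim
    case (elim t)
    show ?case
    proof (cases "t \<in> A")
      case True
      hence "(\<lambda>k. f k t) \<longlonglongrightarrow> g t" using elim by (simp add: A_def)
      moreover have "\<forall>k. f k t \<le> C" using fC True by (simp add: A_def)
      ultimately have "g t \<le> C" by (intro LIMSEQ_le_const2) auto
      thus ?thesis using True by (simp add: H_def)
    next
      case False thus ?thesis by (simp add: H_def)
    qed
  qed
  have Hint: "integrable lborel H"
    by (rule integrableI_nonneg[OF Hm Hnn]) (use Hle in \<open>auto simp: top_unique less_top[symmetric] intro: le_less_trans\<close>)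
  have HI: "integral\<^sup>L lborel H \<le> C - c"
  proof -
    have "ennreal (integral\<^sup>L lborel H) = (\<integral>\<^sup>+t. ennreal (H t) \<partial>lborel)"
      by (rule nn_integral_eq_integral[OF Hint Hnn, symmetric])
    hence "ennreal (integral\<^sup>L lborel H) \<le> ennreal (C - c)" using Hle by simp
    moreover have "C - c \<ge> 0"
    proof -
      have "0 \<le> integral\<^sup>L lborel (h 0)" using hnn by (simp add: Bochner_Integration.integral_nonneg)
      thus ?thesis using hval[of 0] fc[of 0] by (simp add: A_def)
    qed
    ultimately show ?thesis by (simp add: ennreal_le_iff)
  qed
  have ceq: "(\<lambda>t. indicator A t *\<^sub>R g t) = (\<lambda>t. indicator A t *\<^sub>R C - H t)"
    unfolding H_def by (auto simp: indicator_def)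
  have ci: "integrable lborel (\<lambda>t. indicator A t *\<^sub>R C)" using cint unfolding set_integrable_def .
  show si: "set_integrable lborel {0..1} g"
    unfolding set_integrable_def A_def[symmetric] ceq using ci Hint by (rule Bochner_Integration.integrable_diff)
  have "(LINT t:{0..1}|lborel. g t) = integral\<^sup>L lborel (\<lambda>t. indicator A t *\<^sub>R C) - integral\<^sup>L lborel H"
    unfolding set_lebesgue_integral_def A_def[symmetric] ceq using ci Hint by (rule Bochner_Integration.integral_diff)
  also have "integral\<^sup>L lborel (\<lambda>t. indicator A t *\<^sub>R C) = C" using cval unfolding set_lebesgue_integral_def .
  finally show "(LINT t:{0..1}|lborel. g t) \<ge> c" using HI by simp
qed


lemma norm_unit_minus:
  assumes "cmod e = 1" shows "cmod (e - c) = cmod (1 - cnj c * e)"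
proof -
  have ec: "e * cnj e = 1" using assms complex_norm_square[of e] by simp
  have "cmod (1 - cnj c * e) = cmod (cnj (1 - cnj c * e))" by (rule complex_mod_cnj[symmetric])
  also have "\<dots> = cmod (1 - c * cnj e)" by simp
  also have "\<dots> = cmod e * cmod (1 - c * cnj e)" using assms by simp
  also have "\<dots> = cmod (e * (1 - c * cnj e))" by (simp add: norm_mult)
  also have "e * (1 - c * cnj e) = e - c * (e * cnj e)" by (simp add: algebra_simps)
  also have "\<dots> = e - c" using ec by simp
  finally show ?thesis by simp
qed

lemma unit_sq_ineq:
  assumes e: "cmod e = 1" and a: "cmod a = 1" and r: "0 \<le> r" "r \<le> 1"
  shows "(1 + r) * cmod (e - a) \<le> 2 * cmod (e - r * a)"
proof -
  have e2: "(Re e)^2 + (Im e)^2 = 1" using e by (simp add: cmod_def)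
  have a2: "(Re a)^2 + (Im a)^2 = 1" using a by (simp add: cmod_def)
  define x where "x = Re e * Re a + Im e * Im a"
  have n1: "(cmod (e - a))^2 = 2 - 2 * x" unfolding cmod_power2 x_def using e2 a2
    by (simp add: power2_eq_square algebra_simps)
  have "(cmod (e - r * a))^2 = ((Re e)^2 + (Im e)^2) + r^2*((Re a)^2+(Im a)^2) - 2*r*x"
    unfolding cmod_power2 x_def by (simp add: power2_eq_square algebra_simps)
  hence n2: "(cmod (e - r * a))^2 = 1 + r^2 - 2 * r * x" using e2 a2 by simp
  have x1: "x \<ge> -1"
  proof -
    have "0 \<le> (cmod (e - a))^2" by simp
    have "(Re e + Re a)^2 + (Im e + Im a)^2 \<ge> 0" by simp
    thus ?thesis using e2 a2 unfolding x_def by (simp add: power2_eq_square algebra_simps)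
  qed
  have "((1 + r) * cmod (e - a))^2 \<le> (2 * cmod (e - r * a))^2"
    unfolding power_mult_distrib n1 n2
  proof -
    have "2\<^sup>2 * (1 + r\<^sup>2 - 2 * r * x) - (1 + r)\<^sup>2 * (2 - 2 * x) = 2 * (1 - r)^2 * (1 + x)"
      by (simp add: power2_eq_square algebra_simps)
    moreover have "2 * (1 - r)^2 * (1 + x) \<ge> 0" using x1 by simp
    ultimately show "(1 + r)\<^sup>2 * (2 - 2 * x) \<le> 2\<^sup>2 * (1 + r\<^sup>2 - 2 * r * x)" by linarith
  qed
  thus ?thesis by (rule power2_le_imp_le) simp
qed

lemma ln_cmod_ee_measurable [measurable]:
  "(\<lambda>t. ln (cmod (ee t - a))) \<in> borel_measurable lborel"
  by measurable

lemma J_unit: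
  fixes a :: complex
  assumes a: "cmod a = 1"
  shows "set_integrable lborel {0..1} (\<lambda>t. ln (cmod (ee t - a)))"
    and "(LINT t:{0..1}|lborel. ln (cmod (ee t - a))) = 0"
proof -
  define g where "g t = ln (cmod (ee t - a))" for t
  have gi_r: "set_integrable lborel {0..1} (\<lambda>t. ln (cmod (ee t - of_real r * a)))"
    and gv_r: "(LINT t:{0..1}|lborel. ln (cmod (ee t - of_real r * a))) = 0"
    if r: "0 \<le> r" "r < 1" for r
  proof -
    have eq: "(\<lambda>t. ln (cmod (ee t - of_real r * a))) = (\<lambda>t. ln (cmod (1 - cnj (of_real r * a) * ee t)))"
      by (intro ext, subst norm_unit_minus) simp_all
    have b: "cmod (cnj (of_real r * a)) < 1" using r a by (simp add: norm_mult)
    show "set_integrable lborel {0..1} (\<lambda>t. ln (cmod (ee t - of_real r * a)))"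
      unfolding eq by (rule J_small(1)[OF b])
    show "(LINT t:{0..1}|lborel. ln (cmod (ee t - of_real r * a))) = 0"
      unfolding eq by (rule J_small(2)[OF b])
  qed
  define \<rho> :: "nat \<Rightarrow> real" where "\<rho> k = 1 - 1 / (real k + 2)" for k
  have \<rho>01: "0 \<le> \<rho> k" "\<rho> k < 1" for k unfolding \<rho>_def by (auto simp: field_simps)
  have \<rho>lim: "\<rho> \<longlonglongrightarrow> 1"
  proof -
    have "(\<lambda>k. 1 / (real k + 2)) \<longlonglongrightarrow> 0"
      using LIMSEQ_ignore_initial_segment[OF lim_const_over_n[of 1], of 2]
      by (simp add: add.commute)
    hence "(\<lambda>k. 1 - 1 / (real k + 2)) \<longlonglongrightarrow> 1 - 0" by (intro tendsto_intros)
    thus ?thesis unfolding \<rho>_def by simp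
  qed
  have low: "set_integrable lborel {0..1} g \<and> (LINT t:{0..1}|lborel. g t) \<ge> 0"
  proof (intro conjI)
    let ?f = "\<lambda>k t. ln (cmod (ee t - of_real (\<rho> k) * a))"
    have fC: "?f k t \<le> ln 2" for k t
    proof -
      have pos: "cmod (ee t - of_real (\<rho> k) * a) > 0"
      proof -
        have "ee t \<noteq> of_real (\<rho> k) * a"
          using \<rho>01[of k] a by (metis cmod_ee norm_mult norm_of_real abs_of_nonneg mult.right_neutral less_irrefl)
        thus ?thesis by simp
      qed
      have "cmod (ee t - of_real (\<rho> k) * a) \<le> cmod (ee t) + cmod (of_real (\<rho> k) * a)" by (rule norm_triangle_ineq4)
      also have "\<dots> \<le> 2" using \<rho>01[of k] a by (simp add: norm_mult)
      finally show ?thesis using pos by simp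
    qed
    have lim: "AE t in lborel. t \<in> {0..1} \<longrightarrow> (\<lambda>k. ?f k t) \<longlonglongrightarrow> g t"
      using AE_ee_neq[of a]
    proof eventually_elim
      case (elim t)
      have "(\<lambda>k. ee t - of_real (\<rho> k) * a) \<longlonglongrightarrow> ee t - of_real 1 * a"
        by (intro tendsto_intros \<rho>lim)
      hence "(\<lambda>k. ln (cmod (ee t - of_real (\<rho> k) * a))) \<longlonglongrightarrow> ln (cmod (ee t - of_real 1 * a))"
        using elim by (intro tendsto_intros) (auto intro: \<rho>lim)
      thus ?case by (simp add: g_def)
    qed
    have gm: "g \<in> borel_measurable lborel" unfolding g_def by measurable
    have fi: "set_integrable lborel {0..1} (?f k)" for k using gi_r[OF \<rho>01(1) \<rho>01(2)] .
    have fv: "(LINT t:{0..1}|lborel. ?f k t) \<ge> 0" for k using gv_r[OF \<rho>01(1) \<rho>01(2), of k] by simp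
    have "set_integrable lborel {0..1} g" "(LINT t:{0..1}|lborel. g t) \<ge> 0"
      using fatou_upper[of ?f "ln 2" 0 g, OF fi fC fv lim gm] by auto
    thus "set_integrable lborel {0..1} g" "(LINT t:{0..1}|lborel. g t) \<ge> 0" by auto
  qed
  have up: "(LINT t:{0..1}|lborel. g t) \<le> ln (2 / (1 + r))" if r: "0 < r" "r < 1" for r
  proof -
    have ci: "set_integrable lborel {0..1::real} (\<lambda>_. ln (2 / (1 + r)))"
      by (rule borel_integrable_atLeastAtMost') (rule continuous_on_const)
    have "(LINT t:{0..1}|lborel. g t) \<le> (LINT t:{0..1}|lborel. ln (2 / (1 + r)) + ln (cmod (ee t - of_real r * a)))"
    proof (rule set_integral_mono_AE)
      show "set_integrable lborel {0..1} g" using low by simp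
      show "set_integrable lborel {0..1} (\<lambda>t. ln (2 / (1 + r)) + ln (cmod (ee t - of_real r * a)))"
        using ci gi_r[of r] r by auto
      show "AE t\<in>{0..1} in lborel. g t \<le> ln (2 / (1 + r)) + ln (cmod (ee t - of_real r * a))"
        using AE_ee_neq[of a]
      proof eventually_elim
        case (elim t)
        have ne: "ee t - of_real r * a \<noteq> 0"
          using r a by (metis cmod_ee norm_mult norm_of_real abs_of_nonneg mult.right_neutral less_irrefl less_imp_le right_minus_eq)
        have "(1 + r) * cmod (ee t - a) \<le> 2 * cmod (ee t - of_real r * a)"
          using unit_sq_ineq[of "ee t" a r] r a by simp
        hence "cmod (ee t - a) \<le> (2 / (1 + r)) * cmod (ee t - of_real r * a)"
          using r by (simp add: field_simps)
        hence "ln (cmod (ee t - a)) \<le> ln ((2 / (1 + r)) * cmod (ee t - of_real r * a))"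
          using elim r by (intro ln_mono) auto
        also have "\<dots> = ln (2 / (1 + r)) + ln (cmod (ee t - of_real r * a))"
          using ne r by (intro ln_mult_pos) auto
        finally show ?case by (simp add: g_def)
      qed
    qed
    also have "\<dots> = ln (2 / (1 + r))"
      using set_integral_add(2)[OF ci gi_r[of r]] gv_r[of r] r set_integral_const[of "{0..1::real}" lborel "ln (2 / (1 + r))"]
      by simp
    finally show ?thesis .
  qed
  have "(LINT t:{0..1}|lborel. g t) \<le> 0"
  proof (rule ccontr)
    define c where "c = (LINT t:{0..1}|lborel. g t)"
    assume "\<not> (LINT t:{0..1}|lborel. g t) \<le> 0"
    hence c: "c > 0" unfolding c_def by simp
    define r where "r = exp (- c)"
    have r: "0 < r" "r < 1" using c unfolding r_def by auto
    have "c \<le> ln (2 / (1 + r))" using up[OF r] unfolding c_def .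
    hence "exp c \<le> 2 / (1 + r)" using r by (metis exp_le_cancel_iff exp_ln divide_pos_pos zero_less_numeral add_pos_pos zero_less_one)
    hence "exp c * (1 + r) \<le> 2" using r by (simp add: field_simps)
    moreover have "exp c * r = 1" unfolding r_def by (simp add: exp_minus)
    moreover have "exp c > 1" using c by simp
    ultimately show False by (simp add: algebra_simps)
  qed
  thus "set_integrable lborel {0..1} (\<lambda>t. ln (cmod (ee t - a)))"
    "(LINT t:{0..1}|lborel. ln (cmod (ee t - a))) = 0"
    using low unfolding g_def by auto
qed


lemma J_all:
  fixes a :: complex
  shows "set_integrable lborel {0..1} (\<lambda>t. ln (cmod (ee t - a)))"
    and "(LINT t:{0..1}|lborel. ln (cmod (ee t - a))) = ln (max 1 (cmod a))"
proof -
  have "set_integrable lborel {0..1} (\<lambda>t. ln (cmod (ee t - a))) \<and>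
        (LINT t:{0..1}|lborel. ln (cmod (ee t - a))) = ln (max 1 (cmod a))"
  proof (cases "cmod a < 1")
    case True
    have eq: "(\<lambda>t. ln (cmod (ee t - a))) = (\<lambda>t. ln (cmod (1 - cnj a * ee t)))"
      by (intro ext, subst norm_unit_minus) simp_all
    have b: "cmod (cnj a) < 1" using True by simp
    show ?thesis unfolding eq using J_small[OF b] True by simp
  next
    case False
    show ?thesis
    proof (cases "cmod a = 1")
      case True thus ?thesis using J_unit[OF True] by simp
    next
      case False2: False
      hence a1: "cmod a > 1" using False by simp
      hence a0: "a \<noteq> 0" by auto
      have b: "cmod (inverse a) < 1" using a1 by (simp add: norm_inverse inverse_less_1_iff)
      have eq: "ln (cmod (ee t - a)) = ln (cmod a) + ln (cmod (1 - inverse a * ee t))" for t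
      proof -
        have "ee t - a = - a * (1 - inverse a * ee t)" using a0 by (simp add: field_simps)
        hence "cmod (ee t - a) = cmod a * cmod (1 - inverse a * ee t)" by (simp add: norm_mult)
        moreover have "1 - inverse a * ee t \<noteq> 0"
          using b by (metis cmod_ee mult.commute mult_cancel_left1 norm_mult right_minus_eq less_irrefl)
        ultimately show ?thesis using a0 by (simp add: ln_mult_pos)
      qed
      have ci: "set_integrable lborel {0..1::real} (\<lambda>_. ln (cmod a))"
        by (rule borel_integrable_atLeastAtMost') (rule continuous_on_const)
      have cv: "(LINT t:{0..1::real}|lborel. ln (cmod a)) = ln (cmod a)"
        using set_integral_const[of "{0..1::real}" lborel "ln (cmod a)"] by simp
      show ?thesis unfolding eq
        using set_integral_add[OF ci J_small(1)[OF b]] J_small(2)[OF b] cv a1 by simp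
    qed
  qed
  thus "set_integrable lborel {0..1} (\<lambda>t. ln (cmod (ee t - a)))"
    "(LINT t:{0..1}|lborel. ln (cmod (ee t - a))) = ln (max 1 (cmod a))" by auto
qed


lemma poly_ee_measurable [measurable]: "(\<lambda>t. poly p (ee t)) \<in> borel_measurable borel"
  by (intro borel_measurable_continuous_onI continuous_intros)

lemma ln_poly_ee_measurable [measurable]: "(\<lambda>t. ln (cmod (poly p (ee t)))) \<in> borel_measurable lborel"
  by measurable

lemma AE_poly_ee_neq:
  fixes p :: "complex poly"
  assumes "p \<noteq> 0"
  shows "AE t in lborel. poly p (ee t) \<noteq> 0"
proof -
  have "{t. poly p (ee t) = 0} = (\<Union>r\<in>{x. poly p x = 0}. {t. ee t = r})" by auto
  moreover have "countable (\<Union>r\<in>{x. poly p x = 0}. {t. ee t = r})"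
    using poly_roots_finite[OF assms] by (intro countable_UN countable_ee_eq) (auto intro: countable_finite)
  ultimately have "{t. poly p (ee t) = 0} \<in> null_sets lborel"
    by (metis countable_imp_null_set_lborel)
  thus ?thesis by (rule AE_I') auto
qed

lemma jensen_poly:
  fixes p :: "complex poly"
  assumes "poly p 0 \<noteq> 0"
  shows "set_integrable lborel {0..1} (\<lambda>t. ln (cmod (poly p (ee t)))) \<and>
         ln (cmod (poly p 0)) \<le> (LINT t:{0..1}|lborel. ln (cmod (poly p (ee t))))"
  using assms
proof (induction "degree p" arbitrary: p rule: less_induct)
  case less
  show ?case
  proof (cases "degree p = 0")
    case True
    have pc: "poly p x = coeff p 0" for x
      using True by (metis degree_eq_zeroE poly_pCons poly_0 mult_zero_right add.right_neutral coeff_pCons_0)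
    have ci: "set_integrable lborel {0..1::real} (\<lambda>_. ln (cmod (coeff p 0)))"
      by (rule borel_integrable_atLeastAtMost') (rule continuous_on_const)
    have cv: "(LINT t:{0..1::real}|lborel. ln (cmod (coeff p 0))) = ln (cmod (coeff p 0))"
      using set_integral_const[of "{0..1::real}" lborel "ln (cmod (coeff p 0))"] by simp
    show ?thesis unfolding pc using ci cv by simp
  next
    case False
    hence "\<not> constant (poly p)" by (simp add: constant_degree)
    then obtain a where a: "poly p a = 0" using fundamental_theorem_of_algebra by blast
    then obtain q where pq: "p = [:-a, 1:] * q" using poly_eq_0_iff_dvd by (metis dvdE)
    have p0: "p \<noteq> 0" using less.prems by auto
    hence q0: "q \<noteq> 0" using pq by auto
    have dq: "degree q < degree p"
    proof -
      have "degree p = degree [:-a, 1:] + degree q" unfolding pq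
        by (rule degree_mult_eq) (use q0 in auto)
      thus ?thesis by simp
    qed
    have pv: "poly p x = (x - a) * poly q x" for x unfolding pq by (simp only: poly_mult) (simp add: algebra_simps)
    have a0: "a \<noteq> 0" and q00: "poly q 0 \<noteq> 0" using less.prems pv[of 0] by auto
    have IH: "set_integrable lborel {0..1} (\<lambda>t. ln (cmod (poly q (ee t)))) \<and>
         ln (cmod (poly q 0)) \<le> (LINT t:{0..1}|lborel. ln (cmod (poly q (ee t))))"
      using less.hyps[OF dq q00] .
    have AEe: "AE t in lborel. ln (cmod (poly p (ee t))) = ln (cmod (ee t - a)) + ln (cmod (poly q (ee t)))"
      using AE_poly_ee_neq[OF p0]
    proof eventually_elim
      case (elim t)
      hence "ee t - a \<noteq> 0" "poly q (ee t) \<noteq> 0" using pv[of "ee t"] by auto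
      thus ?case using pv[of "ee t"] by (simp add: norm_mult ln_mult_pos)
    qed
    have si: "set_integrable lborel {0..1} (\<lambda>t. ln (cmod (ee t - a)) + ln (cmod (poly q (ee t))))"
      using J_all(1)[of a] IH by auto
    have m2: "(\<lambda>t. ln (cmod (ee t - a)) + ln (cmod (poly q (ee t)))) \<in> borel_measurable lborel" by measurable
    have sp: "set_integrable lborel {0..1} (\<lambda>t. ln (cmod (poly p (ee t))))"
    proof -
      have "AE x\<in>{0..1} in lborel. ln (cmod (poly p (ee x))) = ln (cmod (ee x - a)) + ln (cmod (poly q (ee x)))"
        using AEe by (auto elim: AE_mp)
      thus ?thesis using si set_integrable_cong_AE[OF ln_poly_ee_measurable[of p] m2, of "{0..1}"] by auto
    qed
    have "(LINT t:{0..1}|lborel. ln (cmod (poly p (ee t)))) =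
          (LINT t:{0..1}|lborel. ln (cmod (ee t - a)) + ln (cmod (poly q (ee t))))"
      by (rule set_lebesgue_integral_cong_AE) (use AEe in \<open>auto elim: AE_mp\<close>)
    also have "\<dots> = ln (max 1 (cmod a)) + (LINT t:{0..1}|lborel. ln (cmod (poly q (ee t))))"
      using set_integral_add(2)[OF J_all(1)[of a]] IH J_all(2)[of a] by auto
    also have "\<dots> \<ge> ln (cmod a) + ln (cmod (poly q 0))"
      using IH a0 by (intro add_mono) auto
    finally have "ln (cmod a) + ln (cmod (poly q 0)) \<le> (LINT t:{0..1}|lborel. ln (cmod (poly p (ee t))))" .
    moreover have "ln (cmod (poly p 0)) = ln (cmod a) + ln (cmod (poly q 0))"
      using pv[of 0] a0 q00 by (simp add: norm_mult ln_mult_pos)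
    ultimately show ?thesis using sp by simp
  qed
qed







lemma periodic_int:
  fixes f :: "real \<Rightarrow> 'a"
  assumes per: "\<And>x. f (x + 1) = f x"
  shows "f (x + of_int n) = f x"
proof -
  have pn: "f (x + real m) = f x" for x m
    by (induction m arbitrary: x) (simp_all add: per add.assoc[symmetric] add.commute[of 1])
  show ?thesis
  proof (cases "n \<ge> 0")
    case True thus ?thesis using pn[of x "nat n"] by simp
  next
    case False
    have "f (x + of_int n) = f (x + of_int n + real (nat (-n)))" using pn by simp
    also have "x + of_int n + real (nat (-n)) = x" using False by simp
    finally show ?thesis .
  qed
qed

lemma periodic_shift01:
  fixes f :: "real \<Rightarrow> real"
  assumes per: "\<And>x. f (x + 1) = f x"
    and fm [measurable]: "f \<in> borel_measurable borel"
    and fi: "set_integrable lborel {0..1} f"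
    and c: "0 \<le> c" "c \<le> 1"
  shows "set_integrable lborel {0..1} (\<lambda>x. f (x + c))"
    and "(LINT x:{0..1}|lborel. f (x + c)) = (LINT x:{0..1}|lborel. f x)"
proof -
  define F where "F y = indicator {c..1+c} y * f y" for y
  define G where "G x = indicator {0..c} x * f x" for x
  define K where "K y = indicator {c..<1} y * f y" for y
  have Gi: "integrable lborel G"
    using set_integrable_subset[OF fi, of "{0..c}"] c unfolding G_def set_integrable_def by auto
  have sub: "{c..<1} \<subseteq> {0..1}" using c by auto
  have Ki: "integrable lborel K"
    using set_integrable_subset[OF fi _ sub] unfolding K_def set_integrable_def by auto
  have Gs: "integrable lborel (\<lambda>y. G (-1 + 1 * y))"
    using lborel_integrable_real_affine[OF Gi, of 1 "-1"] by simp
  have FKG: "F y = K y + G (-1 + 1 * y)" for y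
  proof -
    have "f (-1 + y) = f y" using per[of "-1 + y"] by simp
    thus ?thesis using c unfolding F_def K_def G_def by (auto simp: indicator_def)
  qed
  have Fi: "integrable lborel F" unfolding FKG[abs_def] using Ki Gs by (rule Bochner_Integration.integrable_add)
  have eqs: "(\<lambda>x. indicator {0..1} x *\<^sub>R f (x + c)) = (\<lambda>x. F (c + 1 * x))"
    unfolding F_def by (auto simp: indicator_def add.commute)
  show "set_integrable lborel {0..1} (\<lambda>x. f (x + c))"
    unfolding set_integrable_def eqs using lborel_integrable_real_affine[OF Fi, of 1 c] by simp
  have "(LINT x:{0..1}|lborel. f (x + c)) = integral\<^sup>L lborel F"
    unfolding set_lebesgue_integral_def eqs using lborel_integral_real_affine[of 1 F c] by simp
  also have "\<dots> = integral\<^sup>L lborel K + integral\<^sup>L lborel (\<lambda>y. G (-1 + 1 * y))"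
    unfolding FKG[abs_def] using Ki Gs by (rule Bochner_Integration.integral_add)
  also have "integral\<^sup>L lborel (\<lambda>y. G (-1 + 1 * y)) = integral\<^sup>L lborel G"
    using lborel_integral_real_affine[of 1 G "-1"] by simp
  also have "integral\<^sup>L lborel K + integral\<^sup>L lborel G = integral\<^sup>L lborel (\<lambda>y. K y + G y)"
    using Ki Gi by (rule Bochner_Integration.integral_add[symmetric])
  also have "\<dots> = (LINT x:{0..1}|lborel. f x)"
    unfolding set_lebesgue_integral_def
  proof (rule integral_cong_AE)
    show "(\<lambda>y. K y + G y) \<in> borel_measurable lborel" unfolding K_def G_def by measurable
    show "(\<lambda>x. indicator {0..1} x *\<^sub>R f x) \<in> borel_measurable lborel" by measurable
    have "{c, 1} \<in> null_sets lborel" by (rule countable_imp_null_set_lborel) simp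
    hence "AE y in lborel. y \<notin> {c, 1}" by (rule AE_not_in)
    thus "AE y in lborel. K y + G y = indicator {0..1} y *\<^sub>R f y"
    proof eventually_elim
      case (elim y) thus ?case using c unfolding K_def G_def by (auto simp: indicator_def)
    qed
  qed
  finally show "(LINT x:{0..1}|lborel. f (x + c)) = (LINT x:{0..1}|lborel. f x)" .
qed

lemma periodic_shift:
  fixes f :: "real \<Rightarrow> real"
  assumes per: "\<And>x. f (x + 1) = f x"
    and fm [measurable]: "f \<in> borel_measurable borel"
    and fi: "set_integrable lborel {0..1} f"
  shows "set_integrable lborel {0..1} (\<lambda>x. f (x + c))"
    and "(LINT x:{0..1}|lborel. f (x + c)) = (LINT x:{0..1}|lborel. f x)"
proof -
  define d where "d = c - of_int \<lfloor>c\<rfloor>"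
  have d: "0 \<le> d" "d \<le> 1" unfolding d_def by linarith+
  have eq: "f (x + c) = f (x + d)" for x
    using periodic_int[of f "x + d" "\<lfloor>c\<rfloor>", OF per] unfolding d_def by (simp add: algebra_simps)
  show "set_integrable lborel {0..1} (\<lambda>x. f (x + c))"
    unfolding eq by (rule periodic_shift01(1)[OF per fm fi d])
  show "(LINT x:{0..1}|lborel. f (x + c)) = (LINT x:{0..1}|lborel. f x)"
    unfolding eq by (rule periodic_shift01(2)[OF per fm fi d])
qed







lemma mnorm_vec: "norm (M *v x) \<le> mnorm M * norm x"
  unfolding mnorm_def by (rule onorm) simp

lemma mnorm_nonneg: "0 \<le> mnorm M"
  unfolding mnorm_def by (rule onorm_pos_le) simp

lemma mnorm_mult: "mnorm (M ** N) \<le> mnorm M * mnorm N"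
proof -
  have "(\<lambda>v. (M ** N) *v v) = ((*v) M) \<circ> ((*v) N)"
    by (auto simp: matrix_vector_mul_assoc[symmetric] o_def)
  thus ?thesis unfolding mnorm_def by (simp add: onorm_compose)
qed

lemma norm_vec2_le: "norm (x :: complex^2) \<le> cmod (x$1) + cmod (x$2)"
proof -
  have "norm x \<le> (\<Sum>i\<in>UNIV. norm (x$i))" unfolding norm_vec_def by (rule L2_set_le_sum) simp
  thus ?thesis by (simp add: sum_2)
qed

lemma mnorm_le_entries:
  "mnorm M \<le> cmod (M$1$1) + cmod (M$1$2) + cmod (M$2$1) + cmod (M$2$2)"
  unfolding mnorm_def
proof (rule onorm_le)
  fix x :: "complex^2"
  have c1: "cmod (x$1) \<le> norm x" "cmod (x$2) \<le> norm x" using Finite_Cartesian_Product.norm_nth_le[of x 1] Finite_Cartesian_Product.norm_nth_le[of x 2] by auto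
  have "norm (M *v x) \<le> cmod ((M *v x)$1) + cmod ((M *v x)$2)" by (rule norm_vec2_le)
  also have "(M *v x)$1 = M$1$1 * x$1 + M$1$2 * x$2" by (simp add: matrix_vector_mult_def sum_2)
  also have "(M *v x)$2 = M$2$1 * x$1 + M$2$2 * x$2" by (simp add: matrix_vector_mult_def sum_2)
  also have "cmod (M$1$1 * x$1 + M$1$2 * x$2) + cmod (M$2$1 * x$1 + M$2$2 * x$2)
      \<le> (cmod (M$1$1) * cmod (x$1) + cmod (M$1$2) * cmod (x$2)) + (cmod (M$2$1) * cmod (x$1) + cmod (M$2$2) * cmod (x$2))"
    by (intro add_mono norm_triangle_le) (simp_all add: norm_mult)
  also have "\<dots> \<le> (cmod (M$1$1) * norm x + cmod (M$1$2) * norm x) + (cmod (M$2$1) * norm x + cmod (M$2$2) * norm x)"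
    using c1 by (intro add_mono mult_left_mono) auto
  finally show "norm (M *v x) \<le> (cmod (M$1$1) + cmod (M$1$2) + cmod (M$2$1) + cmod (M$2$2)) * norm x"
    by (simp add: algebra_simps)
qed

lemma mnorm_triangle: "mnorm M \<le> mnorm N + mnorm (M - N)"
proof -
  have "(\<lambda>v. M *v v) = (\<lambda>v. N *v v + (M - N) *v v)"
    by (auto simp: matrix_vector_mult_diff_rdistrib)
  hence "mnorm M = onorm (\<lambda>v. N *v v + (M - N) *v v)" unfolding mnorm_def by simp
  also have "\<dots> \<le> onorm ((*v) N) + onorm ((*v) (M - N))" by (rule onorm_triangle) simp_all
  finally show ?thesis unfolding mnorm_def by simp
qed

lemma mnorm_le_norm: "mnorm M \<le> 4 * norm M"
proof -
  have "cmod (M$i$j) \<le> norm M" for i j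
    using Finite_Cartesian_Product.norm_nth_le[where x="M$i" and i=j] Finite_Cartesian_Product.norm_nth_le[where x=M and i=i] by linarith
  thus ?thesis using mnorm_le_entries[of M] by (smt (verit))
qed

lemma mnorm_continuous: "continuous_on UNIV mnorm"
proof -
  have "dist (mnorm M) (mnorm N) \<le> 4 * dist M N" for M N
  proof -
    have "mnorm M - mnorm N \<le> 4 * norm (M - N)" using mnorm_triangle[of M N] mnorm_le_norm[of "M - N"] by simp
    moreover have "mnorm N - mnorm M \<le> 4 * norm (M - N)"
      using mnorm_triangle[of N M] mnorm_le_norm[of "N - M"] by (simp add: norm_minus_commute)
    ultimately show ?thesis by (simp add: dist_norm abs_le_iff)
  qed
  thus ?thesis
    by (intro lipschitz_on_continuous_on[of 4] lipschitz_onI) auto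
qed

lemma mnorm_measurable [measurable]: "mnorm \<in> borel_measurable borel"
  by (intro borel_measurable_continuous_onI mnorm_continuous)

lemma norm_cvec_scale: "norm ((\<chi> i. c * x$i) :: complex^'n) = cmod c * norm x"
  unfolding norm_vec_def by (simp add: norm_mult L2_set_right_distrib)

lemma mnorm_scale: "mnorm (\<chi> i j. M$i$j / c) = mnorm M / cmod c"
proof (cases "c = 0")
  case True
  have "mnorm (\<chi> i j. M$i$j / c) = mnorm 0" using True by (simp add: zero_vec_def)
  also have "mnorm 0 = 0"
  proof -
    have "((*v) (0::complex^2^2)) = (\<lambda>_. 0)" by (simp add: fun_eq_iff)
    thus ?thesis unfolding mnorm_def by (simp add: onorm_zero)
  qed
  finally show ?thesis using True by simp
next
  case False
  have mv: "(\<chi> i j. M$i$j / c) *v x = (\<chi> i. inverse c * (M *v x)$i)" for x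
    by (simp add: matrix_vector_mult_def vec_eq_iff sum_distrib_left divide_inverse mult_ac)
  have le1: "mnorm (\<chi> i j. M$i$j / c) \<le> mnorm M / cmod c"
    unfolding mnorm_def
  proof (rule onorm_le)
    fix x :: "complex^2"
    have "norm ((\<chi> i j. M$i$j / c) *v x) = cmod (inverse c) * norm (M *v x)" unfolding mv by (rule norm_cvec_scale)
    also have "\<dots> \<le> cmod (inverse c) * (mnorm M * norm x)" by (intro mult_left_mono mnorm_vec) simp
    finally show "norm ((\<chi> i j. M$i$j / c) *v x) \<le> onorm ((*v) M) / cmod c * norm x"
      by (simp add: mnorm_def norm_inverse divide_inverse mult_ac)
  qed
  have le2: "mnorm M \<le> cmod c * mnorm (\<chi> i j. M$i$j / c)"
    unfolding mnorm_def
  proof (rule onorm_le)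
    fix x :: "complex^2"
    have "M *v x = (\<chi> i. c * ((\<chi> i j. M$i$j / c) *v x)$i)" unfolding mv using False by (simp add: vec_eq_iff)
    hence "norm (M *v x) = cmod c * norm ((\<chi> i j. M$i$j / c) *v x)" by (simp add: norm_cvec_scale)
    also have "\<dots> \<le> cmod c * (mnorm (\<chi> i j. M$i$j / c) * norm x)" by (intro mult_left_mono mnorm_vec) simp
    finally show "norm (M *v x) \<le> cmod c * onorm ((*v) (\<chi> i j. M$i$j / c)) * norm x"
      by (simp add: mnorm_def mult_ac)
  qed
  have cpos: "cmod c > 0" using False by simp
  define S where "S = mnorm (\<chi> i j. M$i$j / c)"
  have le2': "mnorm M \<le> cmod c * S" using le2 unfolding S_def .
  have h2: "mnorm M / cmod c \<le> S"
    using le2' cpos by (simp add: pos_divide_le_eq mult.commute)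
  have le1': "S \<le> mnorm M / cmod c" using le1 unfolding S_def .
  from le1' h2 have "S = mnorm M / cmod c" by (rule antisym)
  thus ?thesis unfolding S_def .
qed







lemma ee_add: "ee (s + t) = ee s * ee t"
  unfolding ee_def by (simp add: distrib_left exp_add)

lemma ee_1 [simp]: "ee 1 = 1"
  unfolding ee_def by (simp add: exp_eq_1)

lemma ee_0 [simp]: "ee 0 = 1"
  unfolding ee_def by simp

lemma ee_periodic: "ee (t + 1) = ee t"
  by (simp add: ee_add)

lemma ee_nonzero [simp]: "ee t \<noteq> 0"
  unfolding ee_def by simp

lemma ee_nat_mult: "ee (t + real k * p) = ee t * ee p ^ k"
proof -
  have "ee (real k * p) = ee p ^ k"
    unfolding ee_def by (simp add: exp_of_nat_mult[symmetric] mult_ac)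
  thus ?thesis by (simp add: ee_add)
qed

lemma ee_cc_ss: "ee t = of_real (cc t) + \<i> * of_real (ss t)"
proof -
  have "ee t = exp (\<i> * of_real (2 * pi * t))" unfolding ee_def by (simp add: mult_ac)
  also have "\<dots> = cis (2 * pi * t)" by (simp add: cis_conv_exp)
  also have "\<dots> = of_real (cc t) + \<i> * of_real (ss t)"
    unfolding cc_def ss_def by (simp add: cis.ctr complex_eq_iff)
  finally show ?thesis .
qed

lemma cc_ss_sq: "(of_real (cc t) :: complex)^2 + (of_real (ss t))^2 = 1"
proof -
  have "(cc t)^2 + (ss t)^2 = 1" unfolding cc_def ss_def by simp
  hence "of_real ((cc t)^2 + (ss t)^2) = (1::complex)" by simp
  thus ?thesis by simp
qed

lemma ee_sq_ss: "\<i> * (1 - ee t^2) = 2 * of_real (ss t) * ee t"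
proof -
  define c :: complex where "c = of_real (cc t)"
  define s :: complex where "s = of_real (ss t)"
  have cs: "c^2 + s^2 = 1" unfolding c_def s_def by (rule cc_ss_sq)
  have "\<i> * (1 - (c + \<i> * s)^2) = 2 * s * (c + \<i> * s)"
  proof -
    have "\<i> * (1 - (c + \<i> * s)^2) = \<i> * ((c^2 + s^2) - (c + \<i> * s)^2)" using cs by simp
    also have "\<dots> = 2 * s * (c + \<i> * s)" by (simp add: power2_eq_square algebra_simps)
    finally show ?thesis .
  qed
  thus ?thesis unfolding ee_cc_ss c_def s_def .
qed

lemma ee_sq_cc: "1 + ee t^2 = 2 * of_real (cc t) * ee t"
proof -
  define c :: complex where "c = of_real (cc t)"
  define s :: complex where "s = of_real (ss t)"
  have cs: "c^2 + s^2 = 1" unfolding c_def s_def by (rule cc_ss_sq)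
  have "1 + (c + \<i> * s)^2 = 2 * c * (c + \<i> * s)"
  proof -
    have "1 + (c + \<i> * s)^2 = (c^2 + s^2) + (c + \<i> * s)^2" using cs by simp
    also have "\<dots> = 2 * c * (c + \<i> * s)" by (simp add: power2_eq_square algebra_simps)
    finally show ?thesis .
  qed
  thus ?thesis unfolding ee_cc_ss c_def s_def .
qed

definition qP :: "real \<Rightarrow> complex poly" where
  "qP l2 = [: of_real (l2/2), - \<i> * of_real (lprime l2), of_real (l2/2) :]"
definition aP :: "real \<Rightarrow> real \<Rightarrow> complex \<Rightarrow> complex poly" where
  "aP l1 l2 z = [: \<i> * of_real (lprime l1 * l2 / l1),
      inverse (of_real l1) * inverse z + z * of_real ((lprime l1)^2 / l1),
      - \<i> * of_real (lprime l1 * l2 / l1) :]"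
definition bP :: "real \<Rightarrow> real \<Rightarrow> complex \<Rightarrow> complex poly" where
  "bP l1 l2 z = [: - \<i> * of_real (l2/2), - of_real (lprime l1) * z, \<i> * of_real (l2/2) :]"
definition eP :: "real \<Rightarrow> complex \<Rightarrow> complex poly" where
  "eP l1 z = [: 0, of_real l1 * z :]"
definition PM :: "real \<Rightarrow> real \<Rightarrow> complex \<Rightarrow> complex poly^2^2" where
  "PM l1 l2 z = (\<chi> i j. if i = 1 then (if j = 1 then aP l1 l2 z else bP l1 l2 z)
                       else (if j = 1 then bP l1 l2 z else eP l1 z))"

lemma poly_qP: "poly (qP l2) (ee t) = ee t * (of_real (l2 * cc t) - \<i> * of_real (lprime l2))"
proof -
  have "poly (qP l2) (ee t) = of_real (l2/2) * (1 + ee t^2) - \<i> * of_real (lprime l2) * ee t"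
    by (simp add: qP_def algebra_simps power2_eq_square)
  also have "\<dots> = ee t * (of_real (l2 * cc t) - \<i> * of_real (lprime l2))"
    unfolding ee_sq_cc by (simp add: algebra_simps)
  finally show ?thesis .
qed

lemma poly_aP:
  "poly (aP l1 l2 z) (ee t) = ee t * (inverse (complex_of_real l1) * inverse z
              + complex_of_real (2 * lprime l1 / l1 * l2 * ss t)
              + z * complex_of_real ((lprime l1)\<^sup>2 / l1))"
proof -
  have "poly (aP l1 l2 z) (ee t) = of_real (lprime l1 * l2 / l1) * (\<i> * (1 - ee t^2))
      + (inverse (of_real l1) * inverse z + z * of_real ((lprime l1)^2 / l1)) * ee t"
    by (simp add: aP_def power2_eq_square divide_inverse algebra_simps)
  also have "\<dots> = ee t * (inverse (complex_of_real l1) * inverse z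
              + complex_of_real (2 * lprime l1 / l1 * l2 * ss t)
              + z * complex_of_real ((lprime l1)\<^sup>2 / l1))"
    unfolding ee_sq_ss by (simp add: algebra_simps)
  finally show ?thesis .
qed

lemma poly_bP:
  "poly (bP l1 l2 z) (ee t) = ee t * (- complex_of_real (l2 * ss t) - complex_of_real (lprime l1) * z)"
proof -
  have "poly (bP l1 l2 z) (ee t) = - of_real (l2/2) * (\<i> * (1 - ee t^2)) - of_real (lprime l1) * z * ee t"
    by (simp add: bP_def algebra_simps power2_eq_square)
  also have "\<dots> = ee t * (- complex_of_real (l2 * ss t) - complex_of_real (lprime l1) * z)"
    unfolding ee_sq_ss by (simp add: algebra_simps)
  finally show ?thesis .
qed

lemma poly_eP: "poly (eP l1 z) (ee t) = ee t * (complex_of_real l1 * z)"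
  by (simp add: eP_def algebra_simps)

lemma forall_2': "(\<forall>i::2. P i) \<longleftrightarrow> P 1 \<and> P 2"
  by (metis exhaust_2)

lemma UAMO_A_poly:
  "UAMO_A l1 l2 z t = (\<chi> i j. poly (PM l1 l2 z $ i $ j) (ee t) / poly (qP l2) (ee t))"
  unfolding UAMO_A_def Let_def vec_eq_iff forall_2' PM_def
  by (simp add: poly_qP poly_aP poly_bP poly_eP mult_divide_mult_cancel_left)


definition PMsh :: "real \<Rightarrow> real \<Rightarrow> complex \<Rightarrow> complex \<Rightarrow> complex poly^2^2" where
  "PMsh l1 l2 z c = (\<chi> i j. pcompose (PM l1 l2 z $ i $ j) [:0, c:])"

fun PMit :: "real \<Rightarrow> real \<Rightarrow> complex \<Rightarrow> complex \<Rightarrow> nat \<Rightarrow> complex poly^2^2" where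
  "PMit l1 l2 z \<omega> 0 = mat 1"
| "PMit l1 l2 z \<omega> (Suc n) = PMsh l1 l2 z (\<omega>^n) ** PMit l1 l2 z \<omega> n"

definition Qn :: "real \<Rightarrow> complex \<Rightarrow> nat \<Rightarrow> complex \<Rightarrow> complex" where
  "Qn l2 \<omega> n w = (\<Prod>k<n. poly (qP l2) (\<omega>^k * w))"

lemma iter_poly:
  "UAMO_iter l1 l2 \<Phi> z n t =
     (\<chi> i j. poly (PMit l1 l2 z (ee \<Phi>) n $ i $ j) (ee t) / Qn l2 (ee \<Phi>) n (ee t))"
proof (induction n)
  case 0
  show ?case by (simp add: Qn_def vec_eq_iff mat_def)
next
  case (Suc n)
  let ?w = "ee \<Phi>" and ?e = "ee t"
  have A: "UAMO_A l1 l2 z (t + real n * \<Phi>) =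
      (\<chi> i j. poly (PM l1 l2 z $ i $ j) (?w^n * ?e) / poly (qP l2) (?w^n * ?e))"
    unfolding UAMO_A_poly ee_nat_mult by (simp add: mult.commute)
  have Q: "Qn l2 ?w (Suc n) ?e = poly (qP l2) (?w^n * ?e) * Qn l2 ?w n ?e"
    unfolding Qn_def by simp
  show ?case
    unfolding UAMO_iter.simps PMit.simps Suc A Q
    by (simp add: vec_eq_iff matrix_matrix_mult_def PMsh_def poly_sum poly_pcompose
                  sum_divide_distrib mult_ac)
qed







lemma lprime_sq: assumes "0 \<le> l" "l \<le> 1" shows "(lprime l)^2 = 1 - l^2"
proof -
  have h: "0 \<le> 1 - l^2" using power_le_one[OF assms, of 2] by simp
  show ?thesis unfolding lprime_def using h by simp
qed

lemma lprime_nonneg: assumes "0 \<le> l" "l \<le> 1" shows "0 \<le> lprime l"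
proof -
  have h: "0 \<le> 1 - l^2" using power_le_one[OF assms, of 2] by simp
  show ?thesis unfolding lprime_def using h by simp
qed

lemma lprime_le1: "0 \<le> l \<Longrightarrow> l \<le> 1 \<Longrightarrow> lprime l \<le> 1"
  unfolding lprime_def by (simp add: real_sqrt_le_1_iff)

definition tt :: "real \<Rightarrow> real" where "tt l1 = (1 + lprime l1) / l1"
definition vv :: "real \<Rightarrow> complex^2" where "vv l1 = (\<chi> i. if i = 1 then of_real (tt l1) else -1)"
definition muu :: "real \<Rightarrow> real \<Rightarrow> complex" where "muu l1 l2 = \<i> * of_real (l2 / 2 * tt l1)"
definition pn :: "real \<Rightarrow> real \<Rightarrow> complex \<Rightarrow> complex \<Rightarrow> nat \<Rightarrow> complex poly" where
  "pn l1 l2 z \<omega> n = PMit l1 l2 z \<omega> n $ 2 $ 1 * [: of_real (tt l1) :] - PMit l1 l2 z \<omega> n $ 2 $ 2"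

definition E0 :: "complex poly^2^2 \<Rightarrow> complex^2^2" where
  "E0 M = (\<chi> i j. poly (M $ i $ j) 0)"

lemma E0_mult: "E0 (A ** B) = E0 A ** E0 B"
  by (simp add: E0_def matrix_matrix_mult_def vec_eq_iff poly_sum)

lemma E0_PMsh: "E0 (PMsh l1 l2 z c) = E0 (PM l1 l2 z)"
  by (simp add: E0_def PMsh_def poly_pcompose)

lemma tt_sq: assumes "0 < l1" "l1 \<le> 1"
  shows "(tt l1)^2 = 2 * (lprime l1 / l1) * tt l1 + 1"
proof -
  have s: "(lprime l1)^2 = 1 - l1^2" using assms by (intro lprime_sq) auto
  have "(tt l1)^2 * l1^2 = (1 + lprime l1)^2" unfolding tt_def using assms by (simp add: power_divide)
  also have "\<dots> = 2 * lprime l1 * (1 + lprime l1) + l1^2" using s by (simp add: power2_eq_square algebra_simps)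
  also have "\<dots> = (2 * (lprime l1 / l1) * tt l1 + 1) * l1^2" unfolding tt_def using assms
    by (simp add: field_simps power2_eq_square)
  finally show ?thesis using assms by simp
qed

lemma B0_eigen:
  assumes "0 < l1" "l1 \<le> 1"
  shows "E0 (PM l1 l2 z) *v vv l1 = (\<chi> i. muu l1 l2 * vv l1 $ i)"
proof -
  have t2: "(tt l1)^2 = 2 * (lprime l1 / l1) * tt l1 + 1" using tt_sq[OF assms] .
  have t2c: "(of_real (tt l1) :: complex)^2 = 2 * of_real (lprime l1 / l1) * of_real (tt l1) + 1"
  proof -
    have "(of_real ((tt l1)^2) :: complex) = of_real (2 * (lprime l1 / l1) * tt l1 + 1)" using t2 by simp
    thus ?thesis by simp
  qed
  have e1: "\<i> * of_real (lprime l1 * l2 / l1) * of_real (tt l1) + \<i> * of_real (l2 / 2) =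
            \<i> * of_real (l2 / 2 * tt l1) * of_real (tt l1)"
  proof -
    have "\<i> * of_real (l2 / 2 * tt l1) * of_real (tt l1) = \<i> * of_real (l2/2) * (of_real (tt l1))^2"
      by (simp add: power2_eq_square mult_ac)
    also have "\<dots> = \<i> * of_real (l2/2) * (2 * of_real (lprime l1 / l1) * of_real (tt l1) + 1)" by (simp only: t2c)
    also have "\<dots> = \<i> * of_real (lprime l1 * l2 / l1) * of_real (tt l1) + \<i> * of_real (l2 / 2)"
      by (simp add: algebra_simps)
    finally show ?thesis by simp
  qed
  show ?thesis
    unfolding vec_eq_iff forall_2'
    using e1 by (simp add: E0_def PM_def aP_def bP_def eP_def matrix_vector_mult_def sum_2 vv_def muu_def)
qed

lemma E0_PMit_eigen:
  assumes "0 < l1" "l1 \<le> 1"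
  shows "E0 (PMit l1 l2 z \<omega> n) *v vv l1 = (\<chi> i. muu l1 l2 ^ n * vv l1 $ i)"
proof (induction n)
  case 0 show ?case by (simp add: E0_def vec_eq_iff mat_def matrix_vector_mult_def sum_2 forall_2')
next
  case (Suc n)
  have "E0 (PMit l1 l2 z \<omega> (Suc n)) *v vv l1 = E0 (PM l1 l2 z) *v (E0 (PMit l1 l2 z \<omega> n) *v vv l1)"
    by (simp add: E0_mult E0_PMsh matrix_vector_mul_assoc)
  also have "\<dots> = E0 (PM l1 l2 z) *v (\<chi> i. muu l1 l2 ^ n * vv l1 $ i)" using Suc by simp
  also have "\<dots> = (\<chi> i. muu l1 l2 ^ n * (E0 (PM l1 l2 z) *v vv l1) $ i)"
    by (simp add: vec_eq_iff matrix_vector_mult_def sum_distrib_left mult_ac)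
  also have "\<dots> = (\<chi> i. muu l1 l2 ^ Suc n * vv l1 $ i)"
    unfolding B0_eigen[OF assms] by (simp add: mult_ac)
  finally show ?case .
qed

lemma pn_0:
  assumes "0 < l1" "l1 \<le> 1"
  shows "poly (pn l1 l2 z \<omega> n) 0 = - (muu l1 l2 ^ n)"
proof -
  have "(E0 (PMit l1 l2 z \<omega> n) *v vv l1) $ 2 = muu l1 l2 ^ n * vv l1 $ 2"
    using E0_PMit_eigen[OF assms] by simp
  thus ?thesis
    by (simp add: pn_def E0_def matrix_vector_mult_def sum_2 vv_def mult.commute)
qed

lemma iter_vec2:
  "(UAMO_iter l1 l2 \<Phi> z n t *v vv l1) $ 2 = poly (pn l1 l2 z (ee \<Phi>) n) (ee t) / Qn l2 (ee \<Phi>) n (ee t)"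
  unfolding iter_poly
  by (simp add: matrix_vector_mult_def sum_2 vv_def pn_def algebra_simps diff_divide_distrib)

lemma cmod_mu: assumes "0 < l1" "l1 \<le> 1" "0 < l2" shows "cmod (muu l1 l2) = l2 / 2 * tt l1"
proof -
  have "0 \<le> lprime l1" using assms by (intro lprime_nonneg) auto
  hence "0 \<le> l2 / 2 * tt l1" using assms unfolding tt_def by simp
  thus ?thesis unfolding muu_def norm_mult norm_of_real by simp
qed

lemma mnorm_iter_lower:
  "cmod (poly (pn l1 l2 z (ee \<Phi>) n) (ee t)) / cmod (Qn l2 (ee \<Phi>) n (ee t))
     \<le> mnorm (UAMO_iter l1 l2 \<Phi> z n t) * norm (vv l1)"
proof -
  have "cmod (poly (pn l1 l2 z (ee \<Phi>) n) (ee t)) / cmod (Qn l2 (ee \<Phi>) n (ee t)) = cmod ((UAMO_iter l1 l2 \<Phi> z n t *v vv l1) $ 2)"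
    unfolding iter_vec2 by (simp add: norm_divide)
  also have "\<dots> \<le> norm (UAMO_iter l1 l2 \<Phi> z n t *v vv l1)" by (rule Finite_Cartesian_Product.norm_nth_le)
  also have "\<dots> \<le> mnorm (UAMO_iter l1 l2 \<Phi> z n t) * norm (vv l1)" by (rule mnorm_vec)
  finally show ?thesis .
qed


lemma qP_factor:
  assumes "0 < l2" "l2 \<le> 1"
  shows "poly (qP l2) x = of_real (l2/2) * (x - \<i> * of_real ((1 + lprime l2)/l2)) * (x - \<i> * of_real ((lprime l2 - 1)/l2))"
proof -
  have s: "(lprime l2)^2 = 1 - l2^2" using assms by (intro lprime_sq) auto
  have sc: "(of_real (lprime l2) :: complex)^2 = 1 - (of_real l2)^2"
  proof -
    have "(of_real ((lprime l2)^2) :: complex) = of_real (1 - l2^2)" using s by simp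
    thus ?thesis by simp
  qed
  have l0: "(of_real l2 :: complex) \<noteq> 0" using assms by simp
  have "of_real (l2/2) * (x - \<i> * of_real ((1 + lprime l2)/l2)) * (x - \<i> * of_real ((lprime l2 - 1)/l2))
      = of_real (l2/2) * x^2 - \<i> * of_real (lprime l2) * x
        + of_real (l2/2) * ((1 - (of_real (lprime l2))^2) / (of_real l2)^2)"
    using l0 by (simp add: field_simps power2_eq_square)
  also have "\<dots> = of_real (l2/2) * x^2 - \<i> * of_real (lprime l2) * x + of_real (l2/2)"
    unfolding sc using l0 by simp
  finally show ?thesis by (simp add: qP_def algebra_simps power2_eq_square)
qed

lemma q_int:
  assumes l2: "0 < l2" "l2 \<le> 1" and c: "cmod c = 1"
  shows "set_integrable lborel {0..1} (\<lambda>t. ln (cmod (poly (qP l2) (c * ee t))))"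
    and "(LINT t:{0..1}|lborel. ln (cmod (poly (qP l2) (c * ee t)))) = ln ((1 + lprime l2) / 2)"
proof -
  define r1 where "r1 = \<i> * of_real ((1 + lprime l2)/l2)"
  define r2 where "r2 = \<i> * of_real ((lprime l2 - 1)/l2)"
  have c0: "c \<noteq> 0" using c by auto
  have lp: "0 \<le> lprime l2" "lprime l2 \<le> 1" using l2 lprime_nonneg[of l2] lprime_le1 by auto
  have cr1: "cmod (r1 / c) = (1 + lprime l2)/l2"
  proof -
    have "cmod r1 = \<bar>(1 + lprime l2)/l2\<bar>" unfolding r1_def norm_mult norm_of_real by simp
    thus ?thesis using c lp l2 by (simp add: norm_divide)
  qed
  have cr2: "cmod (r2 / c) = (1 - lprime l2)/l2"
  proof -
    have "cmod r2 = \<bar>(lprime l2 - 1)/l2\<bar>" unfolding r2_def norm_mult norm_of_real by simp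
    also have "\<dots> = (1 - lprime l2)/l2" using lp l2 by (simp add: abs_div_pos)
    finally show ?thesis using c by (simp add: norm_divide)
  qed
  have m1: "max 1 (cmod (r1 / c)) = (1 + lprime l2)/l2" unfolding cr1 using l2 lp by (simp add: field_simps)
  have m2: "max 1 (cmod (r2 / c)) = 1"
  proof -
    have s: "(lprime l2)^2 = 1 - l2^2" using l2 by (intro lprime_sq) auto
    have "1 - l2 \<le> lprime l2"
    proof (rule power2_le_imp_le)
      show "(1 - l2)^2 \<le> (lprime l2)^2" unfolding s using l2 by (simp add: power2_eq_square algebra_simps mult_left_le)
    qed (simp add: lp)
    hence "(1 - lprime l2)/l2 \<le> 1" using l2 by (simp add: field_simps)
    thus ?thesis unfolding cr2 by simp
  qed
  have eqAE: "AE t in lborel. ln (cmod (poly (qP l2) (c * ee t))) =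
      ln (l2/2) + ln (cmod (ee t - r1 / c)) + ln (cmod (ee t - r2 / c))"
    using AE_ee_neq[of "r1/c"] AE_ee_neq[of "r2/c"]
  proof eventually_elim
    case (elim t)
    have f: "poly (qP l2) (c * ee t) = of_real (l2/2) * (c * (ee t - r1/c)) * (c * (ee t - r2/c))"
      unfolding qP_factor[OF l2] r1_def[symmetric] r2_def[symmetric] using c0 by (simp add: field_simps)
    have nq: "cmod (poly (qP l2) (c * ee t)) = (l2/2) * cmod (ee t - r1/c) * cmod (ee t - r2/c)"
      unfolding f using c l2 by (simp add: norm_mult)
    have p1: "cmod (ee t - r1/c) > 0" "cmod (ee t - r2/c) > 0" using elim by auto
    have "ln (cmod (poly (qP l2) (c * ee t))) = ln ((l2/2) * cmod (ee t - r1/c) * cmod (ee t - r2/c))"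
      by (simp only: nq)
    also have "\<dots> = ln ((l2/2) * cmod (ee t - r1/c)) + ln (cmod (ee t - r2/c))"
      by (rule ln_mult_pos) (use p1 l2 in auto)
    also have "ln ((l2/2) * cmod (ee t - r1/c)) = ln (l2/2) + ln (cmod (ee t - r1/c))"
      by (rule ln_mult_pos) (use p1 l2 in auto)
    finally show ?case .
  qed
  have ci: "set_integrable lborel {0..1::real} (\<lambda>_. ln (l2/2))"
    by (rule borel_integrable_atLeastAtMost') (rule continuous_on_const)
  have cv: "(LINT t:{0..1::real}|lborel. ln (l2/2)) = ln (l2/2)"
    using set_integral_const[of "{0..1::real}" lborel "ln (l2/2)"] by simp
  have si: "set_integrable lborel {0..1} (\<lambda>t. ln (l2/2) + ln (cmod (ee t - r1 / c)) + ln (cmod (ee t - r2 / c)))"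
    using ci J_all(1)[of "r1/c"] J_all(1)[of "r2/c"] by auto
  have mq: "(\<lambda>t. ln (cmod (poly (qP l2) (c * ee t)))) \<in> borel_measurable lborel"
  proof -
    have "(\<lambda>t. poly (qP l2) (c * ee t)) \<in> borel_measurable borel"
      by (intro borel_measurable_continuous_onI continuous_intros)
    thus ?thesis by measurable
  qed
  have m2': "(\<lambda>t. ln (l2/2) + ln (cmod (ee t - r1 / c)) + ln (cmod (ee t - r2 / c))) \<in> borel_measurable lborel"
    by measurable
  have AE01: "AE t\<in>{0..1} in lborel. ln (cmod (poly (qP l2) (c * ee t))) =
      ln (l2/2) + ln (cmod (ee t - r1 / c)) + ln (cmod (ee t - r2 / c))"
    using eqAE by (auto elim: AE_mp)
  show "set_integrable lborel {0..1} (\<lambda>t. ln (cmod (poly (qP l2) (c * ee t))))"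
    using set_integrable_cong_AE[OF mq m2' AE01] si by simp
  have "(LINT t:{0..1}|lborel. ln (cmod (poly (qP l2) (c * ee t)))) =
        (LINT t:{0..1}|lborel. ln (l2/2) + ln (cmod (ee t - r1 / c)) + ln (cmod (ee t - r2 / c)))"
    by (rule set_lebesgue_integral_cong_AE[OF _ mq m2' AE01]) simp
  also have "\<dots> = ln (l2/2) + ln ((1 + lprime l2)/l2) + ln 1"
    using set_integral_add(2)[OF set_integral_add(1)[OF ci J_all(1)[of "r1/c"]] J_all(1)[of "r2/c"]]
      set_integral_add(2)[OF ci J_all(1)[of "r1/c"]] cv J_all(2)[of "r1/c"] J_all(2)[of "r2/c"] m1 m2
    by simp
  also have "\<dots> = ln ((1 + lprime l2) / 2)"
    using l2 lp by (simp add: ln_mult_pos[symmetric] add_nonneg_pos)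
  finally show "(LINT t:{0..1}|lborel. ln (cmod (poly (qP l2) (c * ee t)))) = ln ((1 + lprime l2) / 2)" .
qed






lemma subadd_mult:
  fixes a :: "nat \<Rightarrow> real"
  assumes sub: "\<And>m n. a (m + n) \<le> a m + a n" and q: "q \<ge> 1"
  shows "a (q * m) \<le> real q * a m"
  using q
proof (induction q rule: nat_induct_at_least)
  case base thus ?case by simp
next
  case (Suc q)
  have "a (Suc q * m) = a (q * m + m)" by (simp add: add.commute)
  also have "\<dots> \<le> a (q * m) + a m" by (rule sub)
  also have "\<dots> \<le> real q * a m + a m" using Suc by simp
  finally show ?case by (simp add: algebra_simps)
qed

lemma fekete:
  fixes a :: "nat \<Rightarrow> real"
  assumes sub: "\<And>m n. a (m + n) \<le> a m + a n"
    and low: "\<And>n. n \<ge> 1 \<Longrightarrow> a n / real n \<ge> c"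
  shows "convergent (\<lambda>n. a n / real n)"
proof -
  define S where "S = (\<lambda>n. a n / real n) ` {1..}"
  define L where "L = Inf S"
  have Sne: "S \<noteq> {}" unfolding S_def by auto
  have Sbdd: "bdd_below S" unfolding S_def bdd_below_def using low by auto
  have Lle: "L \<le> a n / real n" if "n \<ge> 1" for n
    unfolding L_def using that Sbdd by (intro cInf_lower) (auto simp: S_def)
  have "(\<lambda>n. a n / real n) \<longlonglongrightarrow> L"
  proof (rule LIMSEQ_I)
    fix \<epsilon> :: real assume e: "\<epsilon> > 0"
    have "L < L + \<epsilon>/2" using e by simp
    then obtain y where "y \<in> S" "y < L + \<epsilon>/2" unfolding L_def using cInf_less_iff[OF Sne Sbdd] by blast
    then obtain m where m: "m \<ge> 1" "a m / real m < L + \<epsilon>/2" unfolding S_def by auto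
    define x where "x = a m / real m"
    define R where "R = (\<Sum>r<m. \<bar>a r\<bar>)"
    have R0: "R \<ge> 0" unfolding R_def by (simp add: sum_nonneg)
    have Rr: "a r \<le> R" if "r < m" for r
    proof -
      have "\<bar>a r\<bar> \<le> R" unfolding R_def using that by (intro member_le_sum) auto
      thus ?thesis by simp
    qed
    define K where "K = real m * \<bar>x\<bar> + R"
    have K0: "K \<ge> 0" unfolding K_def using R0 by simp
    obtain N0 :: nat where N0: "real N0 > 2 * K / \<epsilon>" using reals_Archimedean2 by blast
    define N where "N = max N0 m"
    show "\<exists>N. \<forall>n\<ge>N. norm (a n / real n - L) < \<epsilon>"
    proof (intro exI allI impI)
      fix n assume nN: "n \<ge> N"
      hence nm: "n \<ge> m" and nN0: "n \<ge> N0" unfolding N_def by auto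
      hence n1: "n \<ge> 1" using m by simp
      hence npos: "real n > 0" by simp
      define q where "q = n div m"
      define r where "r = n mod m"
      have nqr: "n = q * m + r" unfolding q_def r_def by simp
      have rm: "r < m" unfolding r_def using m by simp
      have q1: "q \<ge> 1" unfolding q_def using div_le_mono[OF nm, of m] m by simp
      have "a n \<le> a (q * m) + a r" unfolding nqr by (rule sub)
      also have "\<dots> \<le> real q * a m + R" using subadd_mult[OF sub q1, of m] Rr[OF rm] by simp
      finally have an: "a n \<le> real q * a m + R" .
      have qa: "real q * a m = (real (q * m)) * x" unfolding x_def using m by simp
      have qx: "real (q * m) * x \<le> real n * x + real m * \<bar>x\<bar>"
      proof -
        have "real (q * m) * x - real n * x = - (real r * x)" using nqr by (simp add: algebra_simps)
        also have "\<dots> \<le> real r * \<bar>x\<bar>"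
        proof -
          have "- x \<le> \<bar>x\<bar>" by simp
          hence "real r * (- x) \<le> real r * \<bar>x\<bar>" by (intro mult_left_mono) auto
          thus ?thesis by simp
        qed
        also have "\<dots> \<le> real m * \<bar>x\<bar>" using rm by (intro mult_right_mono) auto
        finally show ?thesis by simp
      qed
      have "a n \<le> real n * x + K" using an qa qx unfolding K_def by linarith
      hence "a n / real n \<le> x + K / real n" using npos by (simp add: field_simps)
      moreover have "K / real n < \<epsilon>/2"
      proof -
        have "real n \<ge> real N0" using nN0 by simp
        hence "real n > 2 * K / \<epsilon>" using N0 by simp
        hence "2 * K < \<epsilon> * real n" using e by (simp add: field_simps)
        thus ?thesis using npos by (simp add: field_simps)
      qed
      ultimately have "a n / real n < L + \<epsilon>" using m(2) unfolding x_def by linarith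
      moreover have "L \<le> a n / real n" using Lle[OF n1] .
      ultimately show "norm (a n / real n - L) < \<epsilon>" by simp
    qed
  qed
  thus ?thesis by (rule convergentI)
qed






lemma iter_add:
  "UAMO_iter l1 l2 \<Phi> z (n + m) t = UAMO_iter l1 l2 \<Phi> z m (t + real n * \<Phi>) ** UAMO_iter l1 l2 \<Phi> z n t"
proof (induction m)
  case 0 show ?case by (simp add: matrix_mul_lid)
next
  case (Suc m)
  have e: "t + real (n + m) * \<Phi> = t + real n * \<Phi> + real m * \<Phi>" by (simp add: algebra_simps)
  show ?case unfolding add_Suc_right UAMO_iter.simps Suc e by (simp add: matrix_mul_assoc)
qed

context
  fixes l1 l2 \<Phi> :: real and z :: complex
  assumes l1: "0 < l1" "l1 \<le> 1" and l2: "0 < l2" "l2 \<le> 1"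
begin

definition ff :: "nat \<Rightarrow> real \<Rightarrow> real" where
  "ff n t = ln (mnorm (UAMO_iter l1 l2 \<Phi> z n t))"
definition Lq :: "nat \<Rightarrow> real \<Rightarrow> real" where
  "Lq n t = (\<Sum>k<n. ln (cmod (poly (qP l2) (ee \<Phi> ^ k * ee t))))"
definition PP :: "nat \<Rightarrow> real \<Rightarrow> real" where
  "PP n t = ln (cmod (poly (pn l1 l2 z (ee \<Phi>) n) (ee t)))"
definition good :: "real \<Rightarrow> bool" where
  "good t \<longleftrightarrow> (\<forall>k. poly (qP l2) (ee \<Phi> ^ k * ee t) \<noteq> 0) \<and> (\<forall>n. poly (pn l1 l2 z (ee \<Phi>) n) (ee t) \<noteq> 0)"

lemma muu_nz: "muu l1 l2 \<noteq> 0"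
proof -
  have e: "cmod (muu l1 l2) = l2 / 2 * tt l1" using cmod_mu l1 l2 by simp
  have "tt l1 > 0" unfolding tt_def using l1 lprime_nonneg[of l1] by simp
  hence "l2 / 2 * tt l1 > 0" using l2 by simp
  hence "cmod (muu l1 l2) > 0" by (simp only: e)
  thus ?thesis by (metis norm_zero less_irrefl)
qed

lemma pn0_nz: "poly (pn l1 l2 z (ee \<Phi>) n) 0 \<noteq> 0"
  using pn_0[OF l1] muu_nz by simp

lemma AE_good: "AE t in lborel. good t"
proof -
  have A1: "AE t in lborel. \<forall>k. poly (qP l2) (ee \<Phi> ^ k * ee t) \<noteq> 0"
  proof (subst AE_all_countable, intro allI)
    fix k :: nat
    define p where "p = pcompose (qP l2) [:0, ee \<Phi> ^ k:]"
    have pv: "poly p x = poly (qP l2) (ee \<Phi> ^ k * x)" for x unfolding p_def by (simp add: poly_pcompose mult.commute)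
    have "poly p 0 \<noteq> 0" unfolding pv using l2 by (simp add: qP_def)
    hence "p \<noteq> 0" by auto
    from AE_poly_ee_neq[OF this] show "AE t in lborel. poly (qP l2) (ee \<Phi> ^ k * ee t) \<noteq> 0"
      by (simp add: pv)
  qed
  have A2: "AE t in lborel. \<forall>n. poly (pn l1 l2 z (ee \<Phi>) n) (ee t) \<noteq> 0"
  proof (subst AE_all_countable, intro allI)
    fix n :: nat
    have "pn l1 l2 z (ee \<Phi>) n \<noteq> 0" using pn0_nz[of n] by auto
    from AE_poly_ee_neq[OF this] show "AE t in lborel. poly (pn l1 l2 z (ee \<Phi>) n) (ee t) \<noteq> 0" .
  qed
  from A1 A2 show ?thesis unfolding good_def by eventually_elim auto
qed

lemma good_Q:
  assumes "good t"
  shows "Qn l2 (ee \<Phi>) n (ee t) \<noteq> 0" "ln (cmod (Qn l2 (ee \<Phi>) n (ee t))) = Lq n t"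
proof -
  have nz: "poly (qP l2) (ee \<Phi> ^ k * ee t) \<noteq> 0" for k using assms unfolding good_def by auto
  show "Qn l2 (ee \<Phi>) n (ee t) \<noteq> 0" unfolding Qn_def using nz by simp
  show "ln (cmod (Qn l2 (ee \<Phi>) n (ee t))) = Lq n t"
    unfolding Qn_def Lq_def prod_norm[symmetric] using nz by (subst ln_prod) auto
qed

lemma vv_pos: "norm (vv l1) > 0"
proof -
  have "vv l1 $ 2 = -1" by (simp add: vv_def)
  hence "vv l1 \<noteq> 0" by (metis zero_index zero_neq_neg_one)
  thus ?thesis by simp
qed

lemma lower_pt:
  assumes "good t"
  shows "mnorm (UAMO_iter l1 l2 \<Phi> z n t) > 0"
    and "PP n t - Lq n t - ln (norm (vv l1)) \<le> ff n t"
proof -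
  let ?p = "cmod (poly (pn l1 l2 z (ee \<Phi>) n) (ee t))" and ?Q = "cmod (Qn l2 (ee \<Phi>) n (ee t))"
  let ?m = "mnorm (UAMO_iter l1 l2 \<Phi> z n t)" and ?V = "norm (vv l1)"
  have p0: "?p > 0" using assms unfolding good_def by auto
  have Q0: "?Q > 0" using good_Q(1)[OF assms] by simp
  have le: "?p / ?Q \<le> ?m * ?V" by (rule mnorm_iter_lower)
  have X0: "?p / ?Q > 0" using p0 Q0 by simp
  hence mV: "?m * ?V > 0" using le by linarith
  show m0: "?m > 0" using mV vv_pos mnorm_nonneg[of "UAMO_iter l1 l2 \<Phi> z n t"]
    by (metis mult_eq_0_iff less_eq_real_def not_less_iff_gr_or_eq)
  have "ln (?p / ?Q) \<le> ln (?m * ?V)" using le X0 by (rule ln_mono)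
  also have "ln (?m * ?V) = ln ?m + ln ?V" using m0 vv_pos by (rule ln_mult_pos)
  also have "ln (?p / ?Q) = ln ?p - ln ?Q" using p0 Q0 by (simp add: ln_div)
  finally show "PP n t - Lq n t - ln ?V \<le> ff n t"
    unfolding PP_def ff_def good_Q(2)[OF assms, symmetric] by simp
qed

lemma Kbound: "\<exists>K>0. \<forall>t. cmod (poly (PMit l1 l2 z (ee \<Phi>) n $ 1 $ 1) (ee t)) + cmod (poly (PMit l1 l2 z (ee \<Phi>) n $ 1 $ 2) (ee t))
     + cmod (poly (PMit l1 l2 z (ee \<Phi>) n $ 2 $ 1) (ee t)) + cmod (poly (PMit l1 l2 z (ee \<Phi>) n $ 2 $ 2) (ee t)) \<le> K"
proof -
  let ?M = "PMit l1 l2 z (ee \<Phi>) n"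
  define G where "G w = cmod (poly (?M $ 1 $ 1) w) + cmod (poly (?M $ 1 $ 2) w) + cmod (poly (?M $ 2 $ 1) w) + cmod (poly (?M $ 2 $ 2) w)" for w
  have "continuous_on (sphere 0 1) G" unfolding G_def by (intro continuous_intros)
  hence "compact (G ` sphere 0 1)" by (intro compact_continuous_image) auto
  hence "bounded (G ` sphere 0 1)" by (rule compact_imp_bounded)
  then obtain B where B: "\<forall>y\<in>G ` sphere 0 1. norm y \<le> B" unfolding bounded_iff by blast
  have "G (ee t) \<le> max B 1" for t
  proof -
    have "ee t \<in> sphere 0 1" by simp
    hence "norm (G (ee t)) \<le> B" using B by blast
    thus ?thesis by simp
  qed
  thus ?thesis unfolding G_def by (intro exI[of _ "max B 1"]) auto
qed

definition KK :: "nat \<Rightarrow> real" where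
  "KK n = (SOME K. K > 0 \<and> (\<forall>t. cmod (poly (PMit l1 l2 z (ee \<Phi>) n $ 1 $ 1) (ee t)) + cmod (poly (PMit l1 l2 z (ee \<Phi>) n $ 1 $ 2) (ee t))
     + cmod (poly (PMit l1 l2 z (ee \<Phi>) n $ 2 $ 1) (ee t)) + cmod (poly (PMit l1 l2 z (ee \<Phi>) n $ 2 $ 2) (ee t)) \<le> K))"

lemma KK: "KK n > 0" "cmod (poly (PMit l1 l2 z (ee \<Phi>) n $ 1 $ 1) (ee t)) + cmod (poly (PMit l1 l2 z (ee \<Phi>) n $ 1 $ 2) (ee t))
     + cmod (poly (PMit l1 l2 z (ee \<Phi>) n $ 2 $ 1) (ee t)) + cmod (poly (PMit l1 l2 z (ee \<Phi>) n $ 2 $ 2) (ee t)) \<le> KK n"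
  using someI_ex[OF Kbound[of n]] unfolding KK_def[symmetric] by auto

lemma upper_pt:
  assumes "good t"
  shows "ff n t \<le> ln (KK n) - Lq n t"
proof -
  let ?M = "PMit l1 l2 z (ee \<Phi>) n" and ?Q = "Qn l2 (ee \<Phi>) n (ee t)"
  have Q0: "cmod ?Q > 0" using good_Q(1)[OF assms] by simp
  have "mnorm (UAMO_iter l1 l2 \<Phi> z n t) \<le>
    cmod (poly (?M $ 1 $ 1) (ee t) / ?Q) + cmod (poly (?M $ 1 $ 2) (ee t) / ?Q) +
    cmod (poly (?M $ 2 $ 1) (ee t) / ?Q) + cmod (poly (?M $ 2 $ 2) (ee t) / ?Q)"
    using mnorm_le_entries[of "UAMO_iter l1 l2 \<Phi> z n t"] unfolding iter_poly by simp
  also have "\<dots> = (cmod (poly (?M $ 1 $ 1) (ee t)) + cmod (poly (?M $ 1 $ 2) (ee t)) +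
    cmod (poly (?M $ 2 $ 1) (ee t)) + cmod (poly (?M $ 2 $ 2) (ee t))) / cmod ?Q"
    by (simp add: norm_divide add_divide_distrib)
  also have "\<dots> \<le> KK n / cmod ?Q" using KK(2)[of n t] Q0 by (intro divide_right_mono) auto
  finally have le: "mnorm (UAMO_iter l1 l2 \<Phi> z n t) \<le> KK n / cmod ?Q" .
  have "ff n t \<le> ln (KK n / cmod ?Q)" unfolding ff_def using le lower_pt(1)[OF assms, of n] by (rule ln_mono)
  also have "\<dots> = ln (KK n) - ln (cmod ?Q)" using KK(1)[of n] Q0 by (simp add: ln_div)
  finally show ?thesis unfolding good_Q(2)[OF assms] .
qed


lemma PP_int:
  shows "set_integrable lborel {0..1} (PP n)"
    and "real n * ln (cmod (muu l1 l2)) \<le> (LINT t:{0..1}|lborel. PP n t)"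
proof -
  have J: "set_integrable lborel {0..1} (\<lambda>t. ln (cmod (poly (pn l1 l2 z (ee \<Phi>) n) (ee t)))) \<and>
      ln (cmod (poly (pn l1 l2 z (ee \<Phi>) n) 0)) \<le> (LINT t:{0..1}|lborel. ln (cmod (poly (pn l1 l2 z (ee \<Phi>) n) (ee t))))"
    by (rule jensen_poly[OF pn0_nz])
  have "ln (cmod (poly (pn l1 l2 z (ee \<Phi>) n) 0)) = real n * ln (cmod (muu l1 l2))"
    using pn_0[OF l1] muu_nz by (simp add: norm_power ln_realpow)
  thus "set_integrable lborel {0..1} (PP n)"
    "real n * ln (cmod (muu l1 l2)) \<le> (LINT t:{0..1}|lborel. PP n t)"
    using J unfolding PP_def[abs_def] by auto
qed

lemma ee_pow_norm: "cmod (ee \<Phi> ^ k) = 1"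
  by (simp add: norm_power)

lemma Lq_int:
  shows "set_integrable lborel {0..1} (Lq n)"
    and "(LINT t:{0..1}|lborel. Lq n t) = real n * ln ((1 + lprime l2) / 2)"
proof (induction n)
  case 0
  { case 1 show ?case unfolding Lq_def set_integrable_def by simp }
  { case 2 show ?case unfolding Lq_def by simp }
next
  case (Suc n)
  have eq: "Lq (Suc n) = (\<lambda>t. Lq n t + ln (cmod (poly (qP l2) (ee \<Phi> ^ n * ee t))))"
    unfolding Lq_def by (simp add: fun_eq_iff)
  have qi: "set_integrable lborel {0..1} (\<lambda>t. ln (cmod (poly (qP l2) (ee \<Phi> ^ n * ee t))))"
    by (rule q_int(1)[OF l2 ee_pow_norm])
  { case 1 show ?case unfolding eq using Suc.IH(1) qi by auto }
  { case 2 show ?case unfolding eq using set_integral_add(2)[OF Suc.IH(1) qi] Suc.IH(2) q_int(2)[OF l2 ee_pow_norm[of n]]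
      by (simp add: algebra_simps) }
qed

definition EM :: "nat \<Rightarrow> real \<Rightarrow> complex^2^2" where
  "EM n t = (\<chi> i j. poly (PMit l1 l2 z (ee \<Phi>) n $ i $ j) (ee t))"

lemma ff_alt: "ff n t = ln (mnorm (EM n t) / cmod (Qn l2 (ee \<Phi>) n (ee t)))"
proof -
  have "UAMO_iter l1 l2 \<Phi> z n t = (\<chi> i j. EM n t $ i $ j / Qn l2 (ee \<Phi>) n (ee t))"
    unfolding iter_poly EM_def by simp
  thus ?thesis unfolding ff_def by (simp add: mnorm_scale)
qed

lemma EM_cont: "continuous_on UNIV (EM n)"
  unfolding EM_def[abs_def] by (intro continuous_intros)

lemma Qn_cont: "continuous_on UNIV (\<lambda>t. Qn l2 (ee \<Phi>) n (ee t))"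
  unfolding Qn_def by (intro continuous_intros)

lemma ff_meas [measurable]: "ff n \<in> borel_measurable borel"
proof -
  have [measurable]: "(\<lambda>t. mnorm (EM n t)) \<in> borel_measurable borel"
    using EM_cont by (intro measurable_compose[OF _ mnorm_measurable] borel_measurable_continuous_onI)
  have [measurable]: "(\<lambda>t. Qn l2 (ee \<Phi>) n (ee t)) \<in> borel_measurable borel"
    by (intro borel_measurable_continuous_onI Qn_cont)
  show ?thesis unfolding ff_alt[abs_def] by measurable
qed

lemma ff_int: "set_integrable lborel {0..1} (ff n)"
proof -
  define lo where "lo t = PP n t - Lq n t - ln (norm (vv l1))" for t
  define up where "up t = ln (KK n) - Lq n t" for t
  have ci: "set_integrable lborel {0..1::real} (\<lambda>_. c)" for c :: real
    by (rule borel_integrable_atLeastAtMost') (rule continuous_on_const)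
  have loi: "set_integrable lborel {0..1} lo"
    unfolding lo_def[abs_def] using PP_int(1) Lq_int(1) ci by auto
  have upi: "set_integrable lborel {0..1} up"
    unfolding up_def[abs_def] using Lq_int(1) ci by auto
  have gi: "set_integrable lborel {0..1} (\<lambda>t. \<bar>lo t\<bar> + \<bar>up t\<bar>)"
    using set_integrable_abs[OF loi] set_integrable_abs[OF upi] by auto
  show ?thesis
  proof (rule set_integrable_bound[OF gi])
    show "set_borel_measurable lborel {0..1} (ff n)" unfolding set_borel_measurable_def by measurable
    show "AE t in lborel. t \<in> {0..1} \<longrightarrow> norm (ff n t) \<le> norm (\<bar>lo t\<bar> + \<bar>up t\<bar>)"
      using AE_good
    proof eventually_elim
      case (elim t)
      have "lo t \<le> ff n t" "ff n t \<le> up t" unfolding lo_def up_def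
        using lower_pt(2)[OF elim] upper_pt[OF elim] by auto
      thus ?case by auto
    qed
  qed
qed

lemma aa_low:
  "real n * (ln (cmod (muu l1 l2)) - ln ((1 + lprime l2) / 2)) - ln (norm (vv l1))
     \<le> (LINT t:{0..1}|lborel. ff n t)"
proof -
  have ci: "set_integrable lborel {0..1::real} (\<lambda>_. c)" for c :: real
    by (rule borel_integrable_atLeastAtMost') (rule continuous_on_const)
  have cv: "(LINT t:{0..1::real}|lborel. c) = c" for c :: real
    using set_integral_const[of "{0..1::real}" lborel c] by simp
  have "(LINT t:{0..1}|lborel. PP n t - Lq n t - ln (norm (vv l1))) \<le> (LINT t:{0..1}|lborel. ff n t)"
  proof (rule set_integral_mono_AE)
    show "set_integrable lborel {0..1} (\<lambda>t. PP n t - Lq n t - ln (norm (vv l1)))"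
      using PP_int(1) Lq_int(1) ci by auto
    show "set_integrable lborel {0..1} (ff n)" by (rule ff_int)
    show "AE t\<in>{0..1} in lborel. PP n t - Lq n t - ln (norm (vv l1)) \<le> ff n t"
      using AE_good by eventually_elim (use lower_pt(2) in auto)
  qed
  moreover have "(LINT t:{0..1}|lborel. PP n t - Lq n t - ln (norm (vv l1))) =
      (LINT t:{0..1}|lborel. PP n t) - real n * ln ((1 + lprime l2) / 2) - ln (norm (vv l1))"
    using set_integral_diff(2)[OF set_integral_diff(1)[OF PP_int(1) Lq_int(1)] ci]
      set_integral_diff(2)[OF PP_int(1) Lq_int(1)] Lq_int(2) cv by simp
  ultimately show ?thesis using PP_int(2)[of n] by (simp add: algebra_simps)
qed


lemma ff_periodic: "ff m (t + 1) = ff m t"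
  unfolding ff_def iter_poly ee_periodic ..

lemma aa_sub:
  "(LINT t:{0..1}|lborel. ff (n + m) t) \<le> (LINT t:{0..1}|lborel. ff m t) + (LINT t:{0..1}|lborel. ff n t)"
proof -
  have sh: "set_integrable lborel {0..1} (\<lambda>t. ff m (t + real n * \<Phi>))"
    "(LINT t:{0..1}|lborel. ff m (t + real n * \<Phi>)) = (LINT t:{0..1}|lborel. ff m t)"
    using periodic_shift[of "ff m", OF ff_periodic ff_meas ff_int] by auto
  have "(LINT t:{0..1}|lborel. ff (n + m) t) \<le> (LINT t:{0..1}|lborel. ff m (t + real n * \<Phi>) + ff n t)"
  proof (rule set_integral_mono_AE)
    show "set_integrable lborel {0..1} (ff (n + m))" by (rule ff_int)
    show "set_integrable lborel {0..1} (\<lambda>t. ff m (t + real n * \<Phi>) + ff n t)"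
      using sh(1) ff_int by auto
    show "AE t\<in>{0..1} in lborel. ff (n + m) t \<le> ff m (t + real n * \<Phi>) + ff n t"
      using AE_good
    proof eventually_elim
      case (elim t)
      let ?X = "UAMO_iter l1 l2 \<Phi> z m (t + real n * \<Phi>)" and ?Y = "UAMO_iter l1 l2 \<Phi> z n t"
      have pos: "mnorm (UAMO_iter l1 l2 \<Phi> z (n + m) t) > 0" by (rule lower_pt(1)[OF elim])
      have le: "mnorm (UAMO_iter l1 l2 \<Phi> z (n + m) t) \<le> mnorm ?X * mnorm ?Y"
        unfolding iter_add by (rule mnorm_mult)
      have "mnorm ?X \<noteq> 0"
      proof
        assume "mnorm ?X = 0"
        hence "mnorm ?X * mnorm ?Y = 0" by simp
        with le pos show False by linarith
      qed
      hence X0: "mnorm ?X > 0" using mnorm_nonneg[of ?X] by (simp add: less_le)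
      have "mnorm ?Y \<noteq> 0"
      proof
        assume "mnorm ?Y = 0"
        hence "mnorm ?X * mnorm ?Y = 0" by simp
        with le pos show False by linarith
      qed
      hence Y0: "mnorm ?Y > 0" using mnorm_nonneg[of ?Y] by (simp add: less_le)
      have "ff (n + m) t \<le> ln (mnorm ?X * mnorm ?Y)" unfolding ff_def using le pos by (rule ln_mono)
      also have "\<dots> = ff m (t + real n * \<Phi>) + ff n t" unfolding ff_def using X0 Y0 by (rule ln_mult_pos)
      finally show ?case by simp
    qed
  qed
  also have "\<dots> = (LINT t:{0..1}|lborel. ff m t) + (LINT t:{0..1}|lborel. ff n t)"
    using set_integral_add(2)[OF sh(1) ff_int] sh(2) by simp
  finally show ?thesis .
qed

lemma main_bound:
  "lyap l1 l2 \<Phi> z \<ge> ln ((l2 * (1 + lprime l1)) / (l1 * (1 + lprime l2)))"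
proof -
  define a where "a n = (LINT t:{0..1}|lborel. ff n t)" for n
  define B where "B = ln (cmod (muu l1 l2)) - ln ((1 + lprime l2) / 2)"
  define C where "C = ln (norm (vv l1))"
  have low: "real n * B - C \<le> a n" for n unfolding a_def B_def C_def by (rule aa_low)
  have sub: "a (m + n) \<le> a m + a n" for m n unfolding a_def using aa_sub[of n m] by (simp add: add.commute)
  have low': "B - \<bar>C\<bar> \<le> a n / real n" if "n \<ge> 1" for n
  proof -
    have np: "real n \<ge> 1" using that by simp
    have "real n * (B - \<bar>C\<bar>) \<le> real n * B - C"
    proof -
      have h1: "0 \<le> (real n - 1) * \<bar>C\<bar>" using np by simp
      have h2: "real n * \<bar>C\<bar> = (real n - 1) * \<bar>C\<bar> + \<bar>C\<bar>" by (simp add: algebra_simps)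
      have "C \<le> real n * \<bar>C\<bar>" using h1 h2 abs_ge_self[of C] by linarith
      thus ?thesis by (simp add: algebra_simps)
    qed
    hence "real n * (B - \<bar>C\<bar>) \<le> a n" using low[of n] by linarith
    thus ?thesis using np by (simp add: field_simps)
  qed
  have conv: "convergent (\<lambda>n. a n / real n)" by (rule fekete[OF sub low'])
  then obtain L where L: "(\<lambda>n. a n / real n) \<longlonglongrightarrow> L" unfolding convergent_def by blast
  have lyapL: "lyap l1 l2 \<Phi> z = L"
  proof -
    have "(\<lambda>n. (1 / real n) * a n) = (\<lambda>n. a n / real n)" by auto
    hence "lyap l1 l2 \<Phi> z = lim (\<lambda>n. a n / real n)" unfolding lyap_def a_def ff_def by simp
    thus ?thesis using L by (simp add: limI)
  qed
  have BL: "B \<le> L"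
  proof -
    have "(\<lambda>n. B - C / real n) \<longlonglongrightarrow> B - 0" by (intro tendsto_intros lim_const_over_n)
    hence t1: "(\<lambda>n. B - C / real n) \<longlonglongrightarrow> B" by simp
    have "\<forall>n\<ge>1. B - C / real n \<le> a n / real n"
    proof (intro allI impI)
      fix n :: nat assume "n \<ge> 1"
      hence np: "real n > 0" by simp
      have "B - C / real n = (real n * B - C) / real n" using np by (simp add: field_simps)
      also have "\<dots> \<le> a n / real n" using low[of n] np by (intro divide_right_mono) auto
      finally show "B - C / real n \<le> a n / real n" .
    qed
    thus ?thesis using LIMSEQ_le[OF t1 L] by blast
  qed
  have "B = ln ((l2 * (1 + lprime l1)) / (l1 * (1 + lprime l2)))"
  proof -
    have lp1: "0 \<le> lprime l1" "0 \<le> lprime l2" using lprime_nonneg l1 l2 by auto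
    have "cmod (muu l1 l2) = l2 / 2 * tt l1" using cmod_mu l1 l2 by simp
    hence "B = ln ((l2 / 2 * ((1 + lprime l1) / l1)) / ((1 + lprime l2) / 2))"
      unfolding B_def tt_def using l1 l2 lp1 by (subst ln_div) (auto intro!: mult_pos_pos divide_pos_pos add_nonneg_pos)
    also have "(l2 / 2 * ((1 + lprime l1) / l1)) / ((1 + lprime l2) / 2) = (l2 * (1 + lprime l1)) / (l1 * (1 + lprime l2))"
    proof -
      have c: "1 + lprime l2 \<noteq> 0" using lp1 by linarith
      have c2: "l1 + l1 * lprime l2 \<noteq> 0" using l1 c by (metis mult.right_neutral distrib_left mult_eq_0_iff less_irrefl)
      show ?thesis using l1 c c2 by (simp add: field_simps)
    qed
    finally show ?thesis .
  qed
  thus ?thesis using lyapL BL by simp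
qed

end






lemma lprime_mono: assumes "0 \<le> a" "a < b" shows "lprime b < lprime a"
  unfolding lprime_def using assms by (intro real_sqrt_less_mono) (simp add: power_strict_mono)

theorem theorem4p6:
  fixes \<Phi> :: real
  assumes "\<Phi> \<notin> \<rat>"
  shows "(\<forall>l1 l2 z. 0 < l1 \<and> l1 \<le> 1 \<and> 0 < l2 \<and> l2 \<le> 1 \<and> z \<noteq> 0 \<longrightarrow>
            lyap l1 l2 \<Phi> z \<ge> ln ((l2 * (1 + lprime l1)) / (l1 * (1 + lprime l2))))
       \<and> (\<forall>l1 l2 z. 0 < l1 \<and> l1 < l2 \<and> l2 \<le> 1 \<and> cmod z = 1 \<longrightarrow> lyap l1 l2 \<Phi> z > 0)
       \<and> (\<forall>l2 z. 0 < l2 \<and> l2 \<le> 1 \<and> cmod z = 1 \<longrightarrow>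
            filterlim (\<lambda>l1. lyap l1 l2 \<Phi> z) at_top (at_right 0))"
proof (intro conjI allI impI)
  fix l1 l2 :: real and z :: complex
  assume "0 < l1 \<and> l1 \<le> 1 \<and> 0 < l2 \<and> l2 \<le> 1 \<and> z \<noteq> 0"
  thus "lyap l1 l2 \<Phi> z \<ge> ln ((l2 * (1 + lprime l1)) / (l1 * (1 + lprime l2)))"
    using main_bound by blast
next
  fix l1 l2 :: real and z :: complex
  assume a: "0 < l1 \<and> l1 < l2 \<and> l2 \<le> 1 \<and> cmod z = 1"
  hence l1: "0 < l1" "l1 \<le> 1" and l2: "0 < l2" "l2 \<le> 1" and lt: "l1 < l2" by auto
  have b: "lyap l1 l2 \<Phi> z \<ge> ln ((l2 * (1 + lprime l1)) / (l1 * (1 + lprime l2)))"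
    using main_bound l1 l2 by blast
  have lp2: "0 \<le> lprime l2" using lprime_nonneg l2 by auto
  have lpm: "lprime l2 < lprime l1" using lprime_mono l1 lt by auto
  have "l1 * (1 + lprime l2) < l2 * (1 + lprime l2)" using lt lp2 by (intro mult_strict_right_mono) auto
  also have "\<dots> \<le> l2 * (1 + lprime l1)" using lpm l2 by (intro mult_left_mono) auto
  finally have "(l2 * (1 + lprime l1)) / (l1 * (1 + lprime l2)) > 1"
    using l1 lp2 by (subst less_divide_eq) (auto intro!: mult_pos_pos)
  hence "ln ((l2 * (1 + lprime l1)) / (l1 * (1 + lprime l2))) > 0" by simp
  thus "lyap l1 l2 \<Phi> z > 0" using b by linarith
next
  fix l2 :: real and z :: complex
  assume a: "0 < l2 \<and> l2 \<le> 1 \<and> cmod z = 1"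
  hence l2: "0 < l2" "l2 \<le> 1" by auto
  have lp2: "0 \<le> lprime l2" "lprime l2 \<le> 1" using lprime_nonneg lprime_le1 l2 by auto
  have lim1: "filterlim (\<lambda>x::real. l2 / 2 * inverse x) at_top (at_right 0)"
    by (rule filterlim_tendsto_pos_mult_at_top[OF tendsto_const _ filterlim_inverse_at_top_right]) (use l2 in simp)
  have lim2: "filterlim (\<lambda>x::real. ln (l2 / 2 * inverse x)) at_top (at_right 0)"
    by (rule filterlim_compose[OF ln_at_top lim1])
  have ev: "eventually (\<lambda>x::real. 0 < x \<and> x < 1) (at_right 0)"
    using eventually_at_right_real[of 0 1] by simp
  show "filterlim (\<lambda>l1. lyap l1 l2 \<Phi> z) at_top (at_right 0)"
  proof (rule filterlim_at_top_mono[OF lim2])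
    show "\<forall>\<^sub>F x in at_right 0. ln (l2 / 2 * inverse x) \<le> lyap x l2 \<Phi> z"
      using ev
    proof eventually_elim
      case (elim x)
      hence x: "0 < x" "x \<le> 1" by auto
      have lp1: "0 \<le> lprime x" using lprime_nonneg x by auto
      have "l2 / 2 * inverse x \<le> (l2 * (1 + lprime x)) / (x * (1 + lprime l2))"
      proof -
        have "l2 / 2 * inverse x = l2 / (x * 2)" by (simp add: field_simps)
        also have "\<dots> \<le> l2 / (x * (1 + lprime l2))"
          using x l2 lp2 by (intro divide_left_mono mult_left_mono mult_pos_pos) auto
        also have "\<dots> \<le> (l2 * (1 + lprime x)) / (x * (1 + lprime l2))"
          using x l2 lp1 lp2 by (intro divide_right_mono) (auto intro!: mult_nonneg_nonneg)
        finally show ?thesis .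
      qed
      hence "ln (l2 / 2 * inverse x) \<le> ln ((l2 * (1 + lprime x)) / (x * (1 + lprime l2)))"
        using x l2 by (intro ln_mono) auto
      also have "\<dots> \<le> lyap x l2 \<Phi> z" using main_bound x l2 by blast
      finally show ?case .
    qed
  qed
qed


end
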